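(* Let $\mathcal C$ be a single-mixed $\mathsf{B1}$-category satisfying $\Pi_{\mathbf t}=\mathrm{id}_{\mathbf t}$. Then for every map $f\colon A\to\mathbf t$ we have $f+\Pi_A=f$, and dually for every map $g\colon\mathbf f\to B$ we have $g+\amalg_B=g$.
   Context: A *-autonomous category is a symmetric monoidal category $(\mathcal C,\wedge,\mathbf t)$ with natural isomorphisms $\alpha,\sigma$, $\rho_A\colon A\wedge\mathbf t\to A$, $\lambda_A\colon\mathbf t\wedge A\to A$, a contravariant functor $A\mapsto\bar A$ with natural isomorphism $\bar{\bar A}\cong A$, and a natural bijection $\mathrm{Hom}(A\wedge B,C)\cong\mathrm{Hom}(A,\bar B\vee C)$, where $A\vee B:=\overline{\bar B\wedge\bar A}$, $\mathbf f:=\bar{\mathbf t}$; $\vee$ is symmetric monoidal with unit isomorphisms $\check\rho_A\colon A\vee\mathbf f\to A$, $\check\lambda_A\colon\mathbf f\vee A\to A$. Switch maps $s$ are the canonical natural maps $A\wedge(B\vee C)\to(A\wedge B)\vee C$ (and variants via symmetries) obtained by transposition. A $\mathsf{B1}$-category is a *-autonomous category such that (1) there is a Boolean algebra $\mathcal B$ and a function $F$ from objects to $\mathcal B$ with $F(A)\le F(B)$ iff $\mathrm{Hom}(A,B)\ne\emptyset$, and (2) every object $A$ carries a cocommutative $\wedge$-comonoid $\Delta_A\colon A\to A\wedge A$, $\Pi_A\colon A\to\mathbf t$ (coassociative, cocommutative, $\rho_A\circ(A\wedge\Pi_A)\circ\Delta_A=\mathrm{id}_A$). Dually every object carries a commutative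 $\vee$-monoid $\nabla_A\colon A\vee A\to A$, $\amalg_A\colon\mathbf f\to A$ (the duals of $\Delta_{\bar A},\Pi_{\bar A}$). The category is single-mixed if $\Pi_{\mathbf f}=\amalg_{\mathbf t}$; then with $e=\Pi_{\mathbf f}$ set $\mathrm{mix}_{A,B}:=(A\vee\lambda_B)\circ(A\vee(e\wedge B))\circ s\circ(\check\rho_A^{-1}\wedge B)\colon A\wedge B\to A\vee B$, and for $f,g\colon A\to B$ define $f+g:=\nabla_B\circ(f\vee g)\circ\mathrm{mix}_{A,A}\circ\Delta_A$. *)

theory Defs
  imports Main
begin

text \<open>Cmp g f is the composite g after f.
  Tn = tensor (wedge) on objects, TnA on arrows, Tu = unit t,
  Asc A B D : (A*B)*D -> A*(B*D), Sw A B : A*B -> B*A,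
  RU A : A*t -> A, LU A : t*A -> A,
  Ng = negation (bar) on objects, NgA on arrows (contravariant),
  DN A : bar bar A -> A,
  Cur A B D : Hom(A*B, D) -> Hom(A, bar B vee D),
  Dup A : A -> A*A (Delta), Del A : A -> t (Pi).\<close>

record ('o, 'a) sacat =
  Ob  :: "'o set"
  Ar  :: "'a set"
  Dom :: "'a \<Rightarrow> 'o"
  Cod :: "'a \<Rightarrow> 'o"
  Cmp :: "'a \<Rightarrow> 'a \<Rightarrow> 'a"
  IdA :: "'o \<Rightarrow> 'a"
  Tn  :: "'o \<Rightarrow> 'o \<Rightarrow> 'o"
  TnA :: "'a \<Rightarrow> 'a \<Rightarrow> 'a"
  Tu  :: "'o"
  Asc :: "'o \<Rightarrow> 'o \<Rightarrow> 'o \<Rightarrow> 'a"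
  Sw  :: "'o \<Rightarrow> 'o \<Rightarrow> 'a"
  RU  :: "'o \<Rightarrow> 'a"
  LU  :: "'o \<Rightarrow> 'a"
  Ng  :: "'o \<Rightarrow> 'o"
  NgA :: "'a \<Rightarrow> 'a"
  DN  :: "'o \<Rightarrow> 'a"
  Cur :: "'o \<Rightarrow> 'o \<Rightarrow> 'o \<Rightarrow> 'a \<Rightarrow> 'a"
  Dup :: "'o \<Rightarrow> 'a"
  Del :: "'o \<Rightarrow> 'a"

definition hom :: "('o,'a) sacat \<Rightarrow> 'o \<Rightarrow> 'o \<Rightarrow> 'a set" where
  "hom C A B = {f \<in> Ar C. Dom C f = A \<and> Cod C f = B}"

definition isiso :: "('o,'a) sacat \<Rightarrow> 'a \<Rightarrow> bool" where
  "isiso C f \<longleftrightarrow> f \<in> Ar C \<and> (\<exists>g \<in> hom C (Cod C f) (Dom C f).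
      Cmp C g f = IdA C (Dom C f) \<and> Cmp C f g = IdA C (Cod C f))"

definition invA :: "('o,'a) sacat \<Rightarrow> 'a \<Rightarrow> 'a" where
  "invA C f = (THE g. g \<in> hom C (Cod C f) (Dom C f) \<and>
      Cmp C g f = IdA C (Dom C f) \<and> Cmp C f g = IdA C (Cod C f))"

definition Vee :: "('o,'a) sacat \<Rightarrow> 'o \<Rightarrow> 'o \<Rightarrow> 'o" where
  "Vee C A B = Ng C (Tn C (Ng C B) (Ng C A))"

definition VeeA :: "('o,'a) sacat \<Rightarrow> 'a \<Rightarrow> 'a \<Rightarrow> 'a" where
  "VeeA C f g = NgA C (TnA C (NgA C g) (NgA C f))"

definition Fo :: "('o,'a) sacat \<Rightarrow> 'o" where
  "Fo C = Ng C (Tu C)"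

definition category :: "('o,'a) sacat \<Rightarrow> bool" where
  "category C \<longleftrightarrow>
    (\<forall>f \<in> Ar C. Dom C f \<in> Ob C \<and> Cod C f \<in> Ob C) \<and>
    (\<forall>A \<in> Ob C. IdA C A \<in> hom C A A) \<and>
    (\<forall>f \<in> Ar C. \<forall>g \<in> Ar C. Cod C f = Dom C g \<longrightarrow> Cmp C g f \<in> hom C (Dom C f) (Cod C g)) \<and>
    (\<forall>f \<in> Ar C. Cmp C (IdA C (Cod C f)) f = f \<and> Cmp C f (IdA C (Dom C f)) = f) \<and>
    (\<forall>f \<in> Ar C. \<forall>g \<in> Ar C. \<forall>h \<in> Ar C. Cod C f = Dom C g \<and> Cod C g = Dom C h \<longrightarrow>
        Cmp C h (Cmp C g f) = Cmp C (Cmp C h g) f)"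

definition sym_monoidal :: "('o,'a) sacat \<Rightarrow> bool" where
  "sym_monoidal C \<longleftrightarrow> category C \<and>
    Tu C \<in> Ob C \<and>
    (\<forall>A \<in> Ob C. \<forall>B \<in> Ob C. Tn C A B \<in> Ob C) \<and>
    (\<forall>A A' B B' f g. f \<in> hom C A A' \<and> g \<in> hom C B B' \<longrightarrow>
        TnA C f g \<in> hom C (Tn C A B) (Tn C A' B')) \<and>
    (\<forall>A \<in> Ob C. \<forall>B \<in> Ob C. TnA C (IdA C A) (IdA C B) = IdA C (Tn C A B)) \<and>
    (\<forall>f \<in> Ar C. \<forall>f' \<in> Ar C. \<forall>g \<in> Ar C. \<forall>g' \<in> Ar C.
        Cod C f = Dom C f' \<and> Cod C g = Dom C g' \<longrightarrow>
        TnA C (Cmp C f' f) (Cmp C g' g) = Cmp C (TnA C f' g') (TnA C f g)) \<and>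
    \<comment> \<open>associator: natural isomorphism\<close>
    (\<forall>A \<in> Ob C. \<forall>B \<in> Ob C. \<forall>D \<in> Ob C.
        Asc C A B D \<in> hom C (Tn C (Tn C A B) D) (Tn C A (Tn C B D)) \<and> isiso C (Asc C A B D)) \<and>
    (\<forall>f \<in> Ar C. \<forall>g \<in> Ar C. \<forall>h \<in> Ar C.
        Cmp C (Asc C (Cod C f) (Cod C g) (Cod C h)) (TnA C (TnA C f g) h) =
        Cmp C (TnA C f (TnA C g h)) (Asc C (Dom C f) (Dom C g) (Dom C h))) \<and>
    \<comment> \<open>symmetry: natural, self-inverse\<close>
    (\<forall>A \<in> Ob C. \<forall>B \<in> Ob C. Sw C A B \<in> hom C (Tn C A B) (Tn C B A) \<and>
        Cmp C (Sw C B A) (Sw C A B) = IdA C (Tn C A B)) \<and>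
    (\<forall>f \<in> Ar C. \<forall>g \<in> Ar C.
        Cmp C (Sw C (Cod C f) (Cod C g)) (TnA C f g) = Cmp C (TnA C g f) (Sw C (Dom C f) (Dom C g))) \<and>
    \<comment> \<open>unitors: natural isomorphisms\<close>
    (\<forall>A \<in> Ob C. RU C A \<in> hom C (Tn C A (Tu C)) A \<and> isiso C (RU C A) \<and>
        LU C A \<in> hom C (Tn C (Tu C) A) A \<and> isiso C (LU C A)) \<and>
    (\<forall>f \<in> Ar C. Cmp C f (RU C (Dom C f)) = Cmp C (RU C (Cod C f)) (TnA C f (IdA C (Tu C))) \<and>
        Cmp C f (LU C (Dom C f)) = Cmp C (LU C (Cod C f)) (TnA C (IdA C (Tu C)) f)) \<and>
    \<comment> \<open>coherence: pentagon, triangle, hexagon, unit/symmetry\<close>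
    (\<forall>A \<in> Ob C. \<forall>B \<in> Ob C. \<forall>D \<in> Ob C. \<forall>E \<in> Ob C.
        Cmp C (Asc C A B (Tn C D E)) (Asc C (Tn C A B) D E) =
        Cmp C (TnA C (IdA C A) (Asc C B D E))
          (Cmp C (Asc C A (Tn C B D) E) (TnA C (Asc C A B D) (IdA C E)))) \<and>
    (\<forall>A \<in> Ob C. \<forall>B \<in> Ob C.
        Cmp C (TnA C (IdA C A) (LU C B)) (Asc C A (Tu C) B) = TnA C (RU C A) (IdA C B)) \<and>
    (\<forall>A \<in> Ob C. \<forall>B \<in> Ob C. \<forall>D \<in> Ob C.
        Cmp C (Asc C B D A) (Cmp C (Sw C A (Tn C B D)) (Asc C A B D)) =
        Cmp C (TnA C (IdA C B) (Sw C A D))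
          (Cmp C (Asc C B A D) (TnA C (Sw C A B) (IdA C D)))) \<and>
    (\<forall>A \<in> Ob C. RU C A = Cmp C (LU C A) (Sw C A (Tu C)))"

definition star_autonomous :: "('o,'a) sacat \<Rightarrow> bool" where
  "star_autonomous C \<longleftrightarrow> sym_monoidal C \<and>
    \<comment> \<open>contravariant functor A \<mapsto> bar A\<close>
    (\<forall>A \<in> Ob C. Ng C A \<in> Ob C) \<and>
    (\<forall>A B f. f \<in> hom C A B \<longrightarrow> NgA C f \<in> hom C (Ng C B) (Ng C A)) \<and>
    (\<forall>A \<in> Ob C. NgA C (IdA C A) = IdA C (Ng C A)) \<and>
    (\<forall>f \<in> Ar C. \<forall>g \<in> Ar C. Cod C f = Dom C g \<longrightarrow>
        NgA C (Cmp C g f) = Cmp C (NgA C f) (NgA C g)) \<and>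
    \<comment> \<open>natural isomorphism bar bar A \<cong> A\<close>
    (\<forall>A \<in> Ob C. DN C A \<in> hom C (Ng C (Ng C A)) A \<and> isiso C (DN C A)) \<and>
    (\<forall>f \<in> Ar C. Cmp C f (DN C (Dom C f)) = Cmp C (DN C (Cod C f)) (NgA C (NgA C f))) \<and>
    \<comment> \<open>natural bijection Hom(A wedge B, D) \<cong> Hom(A, bar B vee D)\<close>
    (\<forall>A \<in> Ob C. \<forall>B \<in> Ob C. \<forall>D \<in> Ob C.
        bij_betw (Cur C A B D) (hom C (Tn C A B) D) (hom C A (Vee C (Ng C B) D))) \<and>
    (\<forall>A B D A' B' D' a b d h. a \<in> hom C A' A \<and> b \<in> hom C B' B \<and> d \<in> hom C D D' \<and>
        h \<in> hom C (Tn C A B) D \<longrightarrow>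
        Cur C A' B' D' (Cmp C d (Cmp C h (TnA C a b))) =
        Cmp C (VeeA C (NgA C b) d) (Cmp C (Cur C A B D h) a))"

definition B1_category :: "('o,'a) sacat \<Rightarrow> ('o \<Rightarrow> 'b::boolean_algebra) \<Rightarrow> bool" where
  "B1_category C F \<longleftrightarrow> star_autonomous C \<and>
    (\<forall>A \<in> Ob C. \<forall>B \<in> Ob C. F A \<le> F B \<longleftrightarrow> hom C A B \<noteq> {}) \<and>
    (\<forall>A \<in> Ob C. Dup C A \<in> hom C A (Tn C A A) \<and> Del C A \<in> hom C A (Tu C) \<and>
       Cmp C (Asc C A A A) (Cmp C (TnA C (Dup C A) (IdA C A)) (Dup C A)) =
         Cmp C (TnA C (IdA C A) (Dup C A)) (Dup C A) \<and>
       Cmp C (Sw C A A) (Dup C A) = Dup C A \<and>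
       Cmp C (RU C A) (Cmp C (TnA C (IdA C A) (Del C A)) (Dup C A)) = IdA C A)"

text \<open>Dual monoid: nabla_B : B vee B -> B and amalg_B : f -> B.\<close>
definition Nab :: "('o,'a) sacat \<Rightarrow> 'o \<Rightarrow> 'a" where
  "Nab C B = Cmp C (DN C B) (NgA C (Dup C (Ng C B)))"

definition Cou :: "('o,'a) sacat \<Rightarrow> 'o \<Rightarrow> 'a" where
  "Cou C B = Cmp C (DN C B) (NgA C (Del C (Ng C B)))"

text \<open>Unit isomorphism rho-check_A : A vee f -> A (dual of lambda).\<close>
definition RUv :: "('o,'a) sacat \<Rightarrow> 'o \<Rightarrow> 'a" where
  "RUv C A = Cmp C (DN C A)
     (NgA C (Cmp C (TnA C (invA C (DN C (Tu C))) (IdA C (Ng C A))) (invA C (LU C (Ng C A)))))"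

definition ev :: "('o,'a) sacat \<Rightarrow> 'o \<Rightarrow> 'o \<Rightarrow> 'a" where
  "ev C B D = the_inv_into (hom C (Tn C (Vee C (Ng C B) D) B) D)
      (Cur C (Vee C (Ng C B) D) B D) (IdA C (Vee C (Ng C B) D))"

text \<open>Switch map (A vee D) wedge B -> A vee (D wedge B), obtained by transposition.\<close>
definition switch :: "('o,'a) sacat \<Rightarrow> 'o \<Rightarrow> 'o \<Rightarrow> 'o \<Rightarrow> 'a" where
  "switch C A D B =
    (let X = Tn C (Vee C A D) B; nA = Ng C A;
         m1 = Cmp C (invA C (Asc C (Vee C A D) nA B))
                (Cmp C (TnA C (IdA C (Vee C A D)) (Sw C B nA)) (Asc C (Vee C A D) B nA));
         e1 = Cmp C (ev C nA D) (TnA C (VeeA C (invA C (DN C A)) (IdA C D)) (IdA C nA));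
         k = Cmp C (TnA C e1 (IdA C B)) m1
     in Cmp C (VeeA C (DN C A) (IdA C (Tn C D B))) (Cur C X nA (Tn C D B) k))"

definition single_mixed :: "('o,'a) sacat \<Rightarrow> bool" where
  "single_mixed C \<longleftrightarrow> Del C (Fo C) = Cou C (Tu C)"

definition mix :: "('o,'a) sacat \<Rightarrow> 'o \<Rightarrow> 'o \<Rightarrow> 'a" where
  "mix C A B = Cmp C (VeeA C (IdA C A) (LU C B))
     (Cmp C (VeeA C (IdA C A) (TnA C (Del C (Fo C)) (IdA C B)))
       (Cmp C (switch C A (Fo C) B) (TnA C (invA C (RUv C A)) (IdA C B))))"

definition plus :: "('o,'a) sacat \<Rightarrow> 'a \<Rightarrow> 'a \<Rightarrow> 'a" where
  "plus C f g = Cmp C (Nab C (Cod C f))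
     (Cmp C (VeeA C f g) (Cmp C (mix C (Dom C f) (Dom C f)) (Dup C (Dom C f))))"

end

theory Submission
  imports Defs
begin


locale SA =
  fixes C :: "('o,'a) sacat"
  assumes SA: "star_autonomous C"
begin

abbreviation cp (infixr "\<cdot>" 55) where "g \<cdot> f \<equiv> Cmp C g f"
abbreviation tn (infixr "\<otimes>" 60) where "f \<otimes> g \<equiv> TnA C f g"
abbreviation ar where "ar f \<equiv> f \<in> Ar C"
abbreviation ob where "ob A \<equiv> A \<in> Ob C"
abbreviation dm where "dm f \<equiv> Dom C f"
abbreviation cd where "cd f \<equiv> Cod C f"
abbreviation ii where "ii A \<equiv> IdA C A"
abbreviation TT where "TT A B \<equiv> Tn C A B"
abbreviation tu where "tu \<equiv> Tu C"
abbreviation NN where "NN A \<equiv> Ng C A"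
abbreviation NA where "NA f \<equiv> NgA C f"
abbreviation VV where "VV A B \<equiv> Vee C A B"
abbreviation VA where "VA f g \<equiv> VeeA C f g"
abbreviation iv where "iv f \<equiv> invA C f"
abbreviation asc where "asc A B D \<equiv> Asc C A B D"
abbreviation sw where "sw A B \<equiv> Sw C A B"
abbreviation ru where "ru A \<equiv> RU C A"
abbreviation lu where "lu A \<equiv> LU C A"
abbreviation dn where "dn A \<equiv> DN C A"
abbreviation fo where "fo \<equiv> Fo C"

lemma sm: "sym_monoidal C" using SA unfolding star_autonomous_def by (elim conjE) blast
lemma cat: "category C" using sm unfolding sym_monoidal_def by (elim conjE) blast

lemmas sm1 = sm[unfolded sym_monoidal_def, THEN conjunct1]
lemmas sm2 = sm[unfolded sym_monoidal_def, THEN conjunct2, THEN conjunct1]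
lemmas sm3 = sm[unfolded sym_monoidal_def, THEN conjunct2, THEN conjunct2, THEN conjunct1]
lemmas sm4 = sm[unfolded sym_monoidal_def, THEN conjunct2, THEN conjunct2, THEN conjunct2, THEN conjunct1]
lemmas sm5 = sm[unfolded sym_monoidal_def, THEN conjunct2, THEN conjunct2, THEN conjunct2, THEN conjunct2, THEN conjunct1]
lemmas sm6 = sm[unfolded sym_monoidal_def, THEN conjunct2, THEN conjunct2, THEN conjunct2, THEN conjunct2, THEN conjunct2, THEN conjunct1]
lemmas sm7 = sm[unfolded sym_monoidal_def, THEN conjunct2, THEN conjunct2, THEN conjunct2, THEN conjunct2, THEN conjunct2, THEN conjunct2, THEN conjunct1]
lemmas sm8 = sm[unfolded sym_monoidal_def, THEN conjunct2, THEN conjunct2, THEN conjunct2, THEN conjunct2, THEN conjunct2, THEN conjunct2, THEN conjunct2, THEN conjunct1]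
lemmas sm9 = sm[unfolded sym_monoidal_def, THEN conjunct2, THEN conjunct2, THEN conjunct2, THEN conjunct2, THEN conjunct2, THEN conjunct2, THEN conjunct2, THEN conjunct2, THEN conjunct1]
lemmas sm10 = sm[unfolded sym_monoidal_def, THEN conjunct2, THEN conjunct2, THEN conjunct2, THEN conjunct2, THEN conjunct2, THEN conjunct2, THEN conjunct2, THEN conjunct2, THEN conjunct2, THEN conjunct1]
lemmas sm11 = sm[unfolded sym_monoidal_def, THEN conjunct2, THEN conjunct2, THEN conjunct2, THEN conjunct2, THEN conjunct2, THEN conjunct2, THEN conjunct2, THEN conjunct2, THEN conjunct2, THEN conjunct2, THEN conjunct1]
lemmas sm12 = sm[unfolded sym_monoidal_def, THEN conjunct2, THEN conjunct2, THEN conjunct2, THEN conjunct2, THEN conjunct2, THEN conjunct2, THEN conjunct2, THEN conjunct2, THEN conjunct2, THEN conjunct2, THEN conjunct2, THEN conjunct1]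
lemmas sm13 = sm[unfolded sym_monoidal_def, THEN conjunct2, THEN conjunct2, THEN conjunct2, THEN conjunct2, THEN conjunct2, THEN conjunct2, THEN conjunct2, THEN conjunct2, THEN conjunct2, THEN conjunct2, THEN conjunct2, THEN conjunct2, THEN conjunct1]
lemmas sm14 = sm[unfolded sym_monoidal_def, THEN conjunct2, THEN conjunct2, THEN conjunct2, THEN conjunct2, THEN conjunct2, THEN conjunct2, THEN conjunct2, THEN conjunct2, THEN conjunct2, THEN conjunct2, THEN conjunct2, THEN conjunct2, THEN conjunct2, THEN conjunct1]
lemmas sm15 = sm[unfolded sym_monoidal_def, THEN conjunct2, THEN conjunct2, THEN conjunct2, THEN conjunct2, THEN conjunct2, THEN conjunct2, THEN conjunct2, THEN conjunct2, THEN conjunct2, THEN conjunct2, THEN conjunct2, THEN conjunct2, THEN conjunct2, THEN conjunct2, THEN conjunct1]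
lemmas sm16 = sm[unfolded sym_monoidal_def, THEN conjunct2, THEN conjunct2, THEN conjunct2, THEN conjunct2, THEN conjunct2, THEN conjunct2, THEN conjunct2, THEN conjunct2, THEN conjunct2, THEN conjunct2, THEN conjunct2, THEN conjunct2, THEN conjunct2, THEN conjunct2, THEN conjunct2]
lemmas sa1 = SA[unfolded star_autonomous_def, THEN conjunct1]
lemmas sa2 = SA[unfolded star_autonomous_def, THEN conjunct2, THEN conjunct1]
lemmas sa3 = SA[unfolded star_autonomous_def, THEN conjunct2, THEN conjunct2, THEN conjunct1]
lemmas sa4 = SA[unfolded star_autonomous_def, THEN conjunct2, THEN conjunct2, THEN conjunct2, THEN conjunct1]
lemmas sa5 = SA[unfolded star_autonomous_def, THEN conjunct2, THEN conjunct2, THEN conjunct2, THEN conjunct2, THEN conjunct1]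
lemmas sa6 = SA[unfolded star_autonomous_def, THEN conjunct2, THEN conjunct2, THEN conjunct2, THEN conjunct2, THEN conjunct2, THEN conjunct1]
lemmas sa7 = SA[unfolded star_autonomous_def, THEN conjunct2, THEN conjunct2, THEN conjunct2, THEN conjunct2, THEN conjunct2, THEN conjunct2, THEN conjunct1]
lemmas sa8 = SA[unfolded star_autonomous_def, THEN conjunct2, THEN conjunct2, THEN conjunct2, THEN conjunct2, THEN conjunct2, THEN conjunct2, THEN conjunct2, THEN conjunct1]
lemmas sa9 = SA[unfolded star_autonomous_def, THEN conjunct2, THEN conjunct2, THEN conjunct2, THEN conjunct2, THEN conjunct2, THEN conjunct2, THEN conjunct2, THEN conjunct2]

lemma hom_iff: "f \<in> hom C A B \<longleftrightarrow> ar f \<and> dm f = A \<and> cd f = B" by (simp add: hom_def)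

lemma ar_dom[simp]: "ar f \<Longrightarrow> ob (dm f)" using cat unfolding category_def by blast
lemma ar_cod[simp]: "ar f \<Longrightarrow> ob (cd f)" using cat unfolding category_def by blast
lemma id_ar[simp]: "ob A \<Longrightarrow> ar (ii A)" using cat unfolding category_def hom_def by blast
lemma id_dom[simp]: "ob A \<Longrightarrow> dm (ii A) = A" using cat unfolding category_def hom_def by blast
lemma id_cod[simp]: "ob A \<Longrightarrow> cd (ii A) = A" using cat unfolding category_def hom_def by blast
lemma comp_ar[simp]: "ar f \<Longrightarrow> ar g \<Longrightarrow> cd f = dm g \<Longrightarrow> ar (g \<cdot> f)"
  using cat unfolding category_def hom_def by blast
lemma comp_dom[simp]: "ar f \<Longrightarrow> ar g \<Longrightarrow> cd f = dm g \<Longrightarrow> dm (g \<cdot> f) = dm f"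
  using cat unfolding category_def hom_def by blast
lemma comp_cod[simp]: "ar f \<Longrightarrow> ar g \<Longrightarrow> cd f = dm g \<Longrightarrow> cd (g \<cdot> f) = cd g"
  using cat unfolding category_def hom_def by blast
lemma id_left[simp]: "ar f \<Longrightarrow> cd f = B \<Longrightarrow> ii B \<cdot> f = f"
  using cat unfolding category_def by blast
lemma id_right[simp]: "ar f \<Longrightarrow> dm f = A \<Longrightarrow> f \<cdot> ii A = f"
  using cat unfolding category_def by blast
lemma assoc[simp]: "ar f \<Longrightarrow> ar g \<Longrightarrow> ar h \<Longrightarrow> cd f = dm g \<Longrightarrow> cd g = dm h \<Longrightarrow>
   (h \<cdot> g) \<cdot> f = h \<cdot> (g \<cdot> f)"
  using cat unfolding category_def by metis

lemma tu_ob[simp]: "ob tu" using sm2 by blast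
lemma tn_ob[simp]: "ob A \<Longrightarrow> ob B \<Longrightarrow> ob (TT A B)" using sm3 by blast
lemma tn_hom: "f \<in> hom C A A' \<Longrightarrow> g \<in> hom C B B' \<Longrightarrow> f \<otimes> g \<in> hom C (TT A B) (TT A' B')"
  using sm4 by blast
lemma tn_ar[simp]: "ar f \<Longrightarrow> ar g \<Longrightarrow> ar (f \<otimes> g)" using tn_hom[of f "dm f" "cd f" g "dm g" "cd g"] by (simp add: hom_def)
lemma tn_dom[simp]: "ar f \<Longrightarrow> ar g \<Longrightarrow> dm (f \<otimes> g) = TT (dm f) (dm g)" using tn_hom[of f "dm f" "cd f" g "dm g" "cd g"] by (simp add: hom_def)
lemma tn_cod[simp]: "ar f \<Longrightarrow> ar g \<Longrightarrow> cd (f \<otimes> g) = TT (cd f) (cd g)" using tn_hom[of f "dm f" "cd f" g "dm g" "cd g"] by (simp add: hom_def)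
lemma tn_id[simp]: "ob A \<Longrightarrow> ob B \<Longrightarrow> ii A \<otimes> ii B = ii (TT A B)" using sm5 by blast
lemma tn_comp: "ar f \<Longrightarrow> ar f' \<Longrightarrow> ar g \<Longrightarrow> ar g' \<Longrightarrow> cd f = dm f' \<Longrightarrow> cd g = dm g' \<Longrightarrow>
   (f' \<cdot> f) \<otimes> (g' \<cdot> g) = (f' \<otimes> g') \<cdot> (f \<otimes> g)" using sm6 by blast
lemma tn_merge[simp]: "ar f \<Longrightarrow> ar f' \<Longrightarrow> ar g \<Longrightarrow> ar g' \<Longrightarrow> cd f = dm f' \<Longrightarrow> cd g = dm g' \<Longrightarrow>
   (f' \<otimes> g') \<cdot> (f \<otimes> g) = (f' \<cdot> f) \<otimes> (g' \<cdot> g)" using tn_comp by simp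
lemma tn_merge2[simp]: "ar f \<Longrightarrow> ar f' \<Longrightarrow> ar g \<Longrightarrow> ar g' \<Longrightarrow> ar r \<Longrightarrow> cd f = dm f' \<Longrightarrow> cd g = dm g' \<Longrightarrow>
   cd r = TT (dm f) (dm g) \<Longrightarrow>
   (f' \<otimes> g') \<cdot> ((f \<otimes> g) \<cdot> r) = ((f' \<cdot> f) \<otimes> (g' \<cdot> g)) \<cdot> r"
  by (subst assoc[symmetric]) auto

lemma asc_hom: "ob A \<Longrightarrow> ob B \<Longrightarrow> ob D \<Longrightarrow> asc A B D \<in> hom C (TT (TT A B) D) (TT A (TT B D)) \<and> isiso C (asc A B D)"
  using sm7 by blast
lemma asc_nat: "ar f \<Longrightarrow> ar g \<Longrightarrow> ar h \<Longrightarrow>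
   asc (cd f) (cd g) (cd h) \<cdot> ((f \<otimes> g) \<otimes> h) = (f \<otimes> (g \<otimes> h)) \<cdot> asc (dm f) (dm g) (dm h)"
  using sm8 by blast
lemma sw_hom: "ob A \<Longrightarrow> ob B \<Longrightarrow> sw A B \<in> hom C (TT A B) (TT B A)"
  using sm9 by blast
lemma sw_inv: "ob A \<Longrightarrow> ob B \<Longrightarrow> sw B A \<cdot> sw A B = ii (TT A B)"
  using sm9 by blast
lemma sw_nat: "ar f \<Longrightarrow> ar g \<Longrightarrow> sw (cd f) (cd g) \<cdot> (f \<otimes> g) = (g \<otimes> f) \<cdot> sw (dm f) (dm g)"
  using sm10 by blast
lemma unit_hom: "ob A \<Longrightarrow> ru A \<in> hom C (TT A tu) A \<and> isiso C (ru A) \<and> lu A \<in> hom C (TT tu A) A \<and> isiso C (lu A)"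
  using sm11 by blast
lemma ru_nat: "ar f \<Longrightarrow> f \<cdot> ru (dm f) = ru (cd f) \<cdot> (f \<otimes> ii tu)"
  using sm12 by blast
lemma lu_nat: "ar f \<Longrightarrow> f \<cdot> lu (dm f) = lu (cd f) \<cdot> (ii tu \<otimes> f)"
  using sm12 by blast
lemma pentagon: "ob A \<Longrightarrow> ob B \<Longrightarrow> ob D \<Longrightarrow> ob E \<Longrightarrow>
  asc A B (TT D E) \<cdot> asc (TT A B) D E = (ii A \<otimes> asc B D E) \<cdot> (asc A (TT B D) E \<cdot> (asc A B D \<otimes> ii E))"
  using sm13 by blast
lemma triangle: "ob A \<Longrightarrow> ob B \<Longrightarrow> (ii A \<otimes> lu B) \<cdot> asc A tu B = ru A \<otimes> ii B"
  using sm14 by blast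
lemma ru_lu_sw: "ob A \<Longrightarrow> ru A = lu A \<cdot> sw A tu"
  using sm16 by blast

lemma ng_ob[simp]: "ob A \<Longrightarrow> ob (NN A)" using sa2 by blast
lemma ng_hom: "f \<in> hom C A B \<Longrightarrow> NA f \<in> hom C (NN B) (NN A)" using sa3 by blast
lemma ng_ar[simp]: "ar f \<Longrightarrow> ar (NA f)" using ng_hom[of f "dm f" "cd f"] by (simp add: hom_def)
lemma ng_dom[simp]: "ar f \<Longrightarrow> dm (NA f) = NN (cd f)" using ng_hom[of f "dm f" "cd f"] by (simp add: hom_def)
lemma ng_cod[simp]: "ar f \<Longrightarrow> cd (NA f) = NN (dm f)" using ng_hom[of f "dm f" "cd f"] by (simp add: hom_def)
lemma ng_id[simp]: "ob A \<Longrightarrow> NA (ii A) = ii (NN A)" using sa4 by blast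
lemma ng_comp: "ar f \<Longrightarrow> ar g \<Longrightarrow> cd f = dm g \<Longrightarrow> NA (g \<cdot> f) = NA f \<cdot> NA g"
  using sa5 by blast
lemma dn_hom: "ob A \<Longrightarrow> dn A \<in> hom C (NN (NN A)) A \<and> isiso C (dn A)"
  using sa6 by blast
lemma dn_nat: "ar f \<Longrightarrow> f \<cdot> dn (dm f) = dn (cd f) \<cdot> NA (NA f)"
  using sa7 by blast
lemma cur_bij: "ob A \<Longrightarrow> ob B \<Longrightarrow> ob D \<Longrightarrow>
    bij_betw (Cur C A B D) (hom C (TT A B) D) (hom C A (VV (NN B) D))"
  using sa8 by blast
lemma cur_nat: "a \<in> hom C A' A \<Longrightarrow> b \<in> hom C B' B \<Longrightarrow> d \<in> hom C D D' \<Longrightarrow>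
        h \<in> hom C (TT A B) D \<Longrightarrow>
        Cur C A' B' D' (d \<cdot> (h \<cdot> (a \<otimes> b))) = VA (NA b) d \<cdot> (Cur C A B D h \<cdot> a)"
  using sa9 by blast


lemma iso_props:
  assumes "isiso C f"
  shows "ar (iv f) \<and> dm (iv f) = cd f \<and> cd (iv f) = dm f \<and> iv f \<cdot> f = ii (dm f) \<and> f \<cdot> iv f = ii (cd f)"
proof -
  obtain g where g: "g \<in> hom C (cd f) (dm f)" "g \<cdot> f = ii (dm f)" "f \<cdot> g = ii (cd f)" and f: "ar f"
    using assms unfolding isiso_def by blast
  have uniq: "g' = g" if "g' \<in> hom C (cd f) (dm f)" "g' \<cdot> f = ii (dm f)" "f \<cdot> g' = ii (cd f)" for g'
  proof -
    have t: "ar g'" "dm g' = cd f" "cd g' = dm f" using that by (auto simp: hom_def)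
    have g0: "ar g" "dm g = cd f" "cd g = dm f" using g by (auto simp: hom_def)
    have "g' = g' \<cdot> ii (cd f)" using t by simp
    also have "\<dots> = g' \<cdot> (f \<cdot> g)" using g by simp
    also have "\<dots> = (g' \<cdot> f) \<cdot> g" using t g0 f by simp
    also have "\<dots> = g" using that(2) g0 by simp
    finally show ?thesis .
  qed
  have "iv f = g" unfolding invA_def
  proof (rule the_equality)
    show "g \<in> hom C (cd f) (dm f) \<and> g \<cdot> f = ii (dm f) \<and> f \<cdot> g = ii (cd f)" using g by blast
    show "\<And>x. x \<in> hom C (cd f) (dm f) \<and> x \<cdot> f = ii (dm f) \<and> f \<cdot> x = ii (cd f) \<Longrightarrow> x = g"
      using uniq by blast
  qed
  then show ?thesis using g by (simp add: hom_def)
qed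

lemma iso_ar[simp]: "isiso C f \<Longrightarrow> ar f" unfolding isiso_def by blast
lemma iv_ar[simp]: "isiso C f \<Longrightarrow> ar (iv f)" using iso_props by blast
lemma iv_dom[simp]: "isiso C f \<Longrightarrow> dm (iv f) = cd f" using iso_props by blast
lemma iv_cod[simp]: "isiso C f \<Longrightarrow> cd (iv f) = dm f" using iso_props by blast
lemma iv_left[simp]: "isiso C f \<Longrightarrow> dm f = A \<Longrightarrow> iv f \<cdot> f = ii A" using iso_props by blast
lemma iv_right[simp]: "isiso C f \<Longrightarrow> cd f = A \<Longrightarrow> f \<cdot> iv f = ii A" using iso_props by blast
lemma iv_left2[simp]: "isiso C f \<Longrightarrow> ar r \<Longrightarrow> cd r = dm f \<Longrightarrow> iv f \<cdot> (f \<cdot> r) = r"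
  by (subst assoc[symmetric]) auto
lemma iv_right2[simp]: "isiso C f \<Longrightarrow> ar r \<Longrightarrow> cd r = cd f \<Longrightarrow> f \<cdot> (iv f \<cdot> r) = r"
  by (subst assoc[symmetric]) auto

lemma iso_unique:
  assumes "ar f" "ar g" "dm g = cd f" "cd g = dm f" "g \<cdot> f = ii (dm f)" "f \<cdot> g = ii (cd f)"
  shows "isiso C f" "iv f = g"
proof -
  show i: "isiso C f" unfolding isiso_def using assms by (auto simp: hom_def)
  have "iv f = iv f \<cdot> (f \<cdot> g)" using assms i by simp
  also have "\<dots> = g" using assms i by (subst assoc[symmetric]) auto
  finally show "iv f = g" .
qed

lemma iso_cancel_left: "isiso C h \<Longrightarrow> ar x \<Longrightarrow> ar y \<Longrightarrow> cd x = dm h \<Longrightarrow> cd y = dm h \<Longrightarrow>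
   h \<cdot> x = h \<cdot> y \<Longrightarrow> x = y"
  by (metis iv_left2)
lemma iso_cancel_right: "isiso C h \<Longrightarrow> ar x \<Longrightarrow> ar y \<Longrightarrow> dm x = cd h \<Longrightarrow> dm y = cd h \<Longrightarrow>
   x \<cdot> h = y \<cdot> h \<Longrightarrow> x = y"
proof -
  assume a: "isiso C h" "ar x" "ar y" "dm x = cd h" "dm y = cd h" "x \<cdot> h = y \<cdot> h"
  have "x = (x \<cdot> h) \<cdot> iv h" using a(1-4) by simp
  also have "\<dots> = (y \<cdot> h) \<cdot> iv h" using a by simp
  also have "\<dots> = y" using a(1-3,5) by simp
  finally show "x = y" .
qed

lemma asc_ar[simp]: "ob A \<Longrightarrow> ob B \<Longrightarrow> ob D \<Longrightarrow> ar (asc A B D)" using asc_hom by (simp add: hom_def)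
lemma asc_dom[simp]: "ob A \<Longrightarrow> ob B \<Longrightarrow> ob D \<Longrightarrow> dm (asc A B D) = TT (TT A B) D" using asc_hom by (simp add: hom_def)
lemma asc_cod[simp]: "ob A \<Longrightarrow> ob B \<Longrightarrow> ob D \<Longrightarrow> cd (asc A B D) = TT A (TT B D)" using asc_hom by (simp add: hom_def)
lemma asc_iso[simp]: "ob A \<Longrightarrow> ob B \<Longrightarrow> ob D \<Longrightarrow> isiso C (asc A B D)" using asc_hom by simp
lemma sw_ar[simp]: "ob A \<Longrightarrow> ob B \<Longrightarrow> ar (sw A B)" using sw_hom by (simp add: hom_def)
lemma sw_dom[simp]: "ob A \<Longrightarrow> ob B \<Longrightarrow> dm (sw A B) = TT A B" using sw_hom by (simp add: hom_def)
lemma sw_cod[simp]: "ob A \<Longrightarrow> ob B \<Longrightarrow> cd (sw A B) = TT B A" using sw_hom by (simp add: hom_def)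
lemma sw_inv2[simp]: "ob A \<Longrightarrow> ob B \<Longrightarrow> ar r \<Longrightarrow> cd r = TT A B \<Longrightarrow> sw B A \<cdot> (sw A B \<cdot> r) = r"
  by (subst assoc[symmetric]) (auto simp: sw_inv)
lemma sw_inv1[simp]: "ob A \<Longrightarrow> ob B \<Longrightarrow> sw B A \<cdot> sw A B = ii (TT A B)" by (rule sw_inv)
lemma sw_iso[simp]: "ob A \<Longrightarrow> ob B \<Longrightarrow> isiso C (sw A B)" using iso_unique(1)[of "sw A B" "sw B A"] by simp
lemma sw_iv[simp]: "ob A \<Longrightarrow> ob B \<Longrightarrow> iv (sw A B) = sw B A" using iso_unique(2)[of "sw A B" "sw B A"] by simp
lemma ru_ar[simp]: "ob A \<Longrightarrow> ar (ru A)" using unit_hom by (simp add: hom_def)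
lemma ru_dom[simp]: "ob A \<Longrightarrow> dm (ru A) = TT A tu" using unit_hom by (simp add: hom_def)
lemma ru_cod[simp]: "ob A \<Longrightarrow> cd (ru A) = A" using unit_hom by (simp add: hom_def)
lemma ru_iso[simp]: "ob A \<Longrightarrow> isiso C (ru A)" using unit_hom by simp
lemma lu_ar[simp]: "ob A \<Longrightarrow> ar (lu A)" using unit_hom by (simp add: hom_def)
lemma lu_dom[simp]: "ob A \<Longrightarrow> dm (lu A) = TT tu A" using unit_hom by (simp add: hom_def)
lemma lu_cod[simp]: "ob A \<Longrightarrow> cd (lu A) = A" using unit_hom by (simp add: hom_def)
lemma lu_iso[simp]: "ob A \<Longrightarrow> isiso C (lu A)" using unit_hom by simp
lemma dn_ar[simp]: "ob A \<Longrightarrow> ar (dn A)" using dn_hom by (simp add: hom_def)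
lemma dn_dom[simp]: "ob A \<Longrightarrow> dm (dn A) = NN (NN A)" using dn_hom by (simp add: hom_def)
lemma dn_cod[simp]: "ob A \<Longrightarrow> cd (dn A) = A" using dn_hom by (simp add: hom_def)
lemma dn_iso[simp]: "ob A \<Longrightarrow> isiso C (dn A)" using dn_hom by simp

lemma ng_merge[simp]: "ar f \<Longrightarrow> ar g \<Longrightarrow> cd f = dm g \<Longrightarrow> NA f \<cdot> NA g = NA (g \<cdot> f)"
  by (simp add: ng_comp)
lemma ng_merge2[simp]: "ar f \<Longrightarrow> ar g \<Longrightarrow> ar r \<Longrightarrow> cd f = dm g \<Longrightarrow> cd r = NN (cd g) \<Longrightarrow>
    NA f \<cdot> (NA g \<cdot> r) = NA (g \<cdot> f) \<cdot> r"
  by (subst assoc[symmetric]) auto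

declare Vee_def[simp] VeeA_def[simp] Fo_def[simp]

lemma cur_hom: "ar h \<Longrightarrow> dm h = TT A B \<Longrightarrow> cd h = D \<Longrightarrow> ob A \<Longrightarrow> ob B \<Longrightarrow>
    Cur C A B D h \<in> hom C A (VV (NN B) D)"
proof -
  assume a: "ar h" "dm h = TT A B" "cd h = D" "ob A" "ob B"
  then have "ob D" "h \<in> hom C (TT A B) D" by (auto simp: hom_def)
  then show ?thesis using bij_betw_apply[OF cur_bij[of A B D]] a by (simp del: Vee_def)
qed
lemma cur_ar[simp]: "ar h \<Longrightarrow> dm h = TT A B \<Longrightarrow> cd h = D \<Longrightarrow> ob A \<Longrightarrow> ob B \<Longrightarrow> ar (Cur C A B D h)"
  using cur_hom by (simp add: hom_def del: Vee_def)
lemma cur_dom[simp]: "ar h \<Longrightarrow> dm h = TT A B \<Longrightarrow> cd h = D \<Longrightarrow> ob A \<Longrightarrow> ob B \<Longrightarrow> dm (Cur C A B D h) = A"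
  using cur_hom by (simp add: hom_def del: Vee_def)
lemma cur_cod[simp]: "ar h \<Longrightarrow> dm h = TT A B \<Longrightarrow> cd h = D \<Longrightarrow> ob A \<Longrightarrow> ob B \<Longrightarrow>
   cd (Cur C A B D h) = VV (NN B) D"
  using cur_hom by (simp add: hom_def del: Vee_def)
lemma cur_inj: "ar h \<Longrightarrow> dm h = TT A B \<Longrightarrow> cd h = D \<Longrightarrow> ar h' \<Longrightarrow> dm h' = TT A B \<Longrightarrow> cd h' = D \<Longrightarrow>
   ob A \<Longrightarrow> ob B \<Longrightarrow> Cur C A B D h = Cur C A B D h' \<Longrightarrow> h = h'"
  using cur_bij[of A B D] unfolding bij_betw_def inj_on_def by (auto simp: hom_def)
lemma cur_surj: "ar k \<Longrightarrow> dm k = A \<Longrightarrow> cd k = VV (NN B) D \<Longrightarrow> ob B \<Longrightarrow> ob D \<Longrightarrow>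
   \<exists>h. ar h \<and> dm h = TT A B \<and> cd h = D \<and> Cur C A B D h = k"
proof -
  assume a: "ar k" "dm k = A" "cd k = VV (NN B) D" "ob B" "ob D"
  then have "k \<in> hom C A (VV (NN B) D)" "ob A" by (auto simp: hom_def)
  then show ?thesis using cur_bij[of A B D] a unfolding bij_betw_def by (force simp: hom_def)
qed

definition evl where "evl B D = ev C B D"

lemma ev_props: "ob B \<Longrightarrow> ob D \<Longrightarrow> ar (ev C B D) \<and> dm (ev C B D) = TT (VV (NN B) D) B \<and> cd (ev C B D) = D
   \<and> Cur C (VV (NN B) D) B D (ev C B D) = ii (VV (NN B) D)"
proof -
  assume a: "ob B" "ob D"
  let ?V = "VV (NN B) D"
  have ob: "ob ?V" using a by simp
  have bij: "bij_betw (Cur C ?V B D) (hom C (TT ?V B) D) (hom C ?V ?V)" using cur_bij[of ?V B D] a ob by simp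
  have idin: "ii ?V \<in> hom C ?V ?V" using ob by (simp add: hom_def)
  have "ev C B D \<in> hom C (TT ?V B) D" unfolding ev_def
    using the_inv_into_into[of "Cur C ?V B D" "hom C (TT ?V B) D" "ii ?V"] bij idin
    unfolding bij_betw_def by (auto simp del: Vee_def)
  moreover have "Cur C ?V B D (ev C B D) = ii ?V" unfolding ev_def
    using f_the_inv_into_f[of "Cur C ?V B D" "hom C (TT ?V B) D" "ii ?V"] bij idin
    unfolding bij_betw_def by (auto simp del: Vee_def)
  ultimately show ?thesis by (simp add: hom_def del: Vee_def)
qed
lemma ev_ar[simp]: "ob B \<Longrightarrow> ob D \<Longrightarrow> ar (ev C B D)" using ev_props by blast
lemma ev_dom[simp]: "ob B \<Longrightarrow> ob D \<Longrightarrow> dm (ev C B D) = TT (VV (NN B) D) B" using ev_props by blast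
lemma ev_cod[simp]: "ob B \<Longrightarrow> ob D \<Longrightarrow> cd (ev C B D) = D" using ev_props by blast
lemma cur_ev: "ob B \<Longrightarrow> ob D \<Longrightarrow> Cur C (VV (NN B) D) B D (ev C B D) = ii (VV (NN B) D)" using ev_props by blast

lemma curN: "ar a \<Longrightarrow> ar b \<Longrightarrow> ar d \<Longrightarrow> ar h \<Longrightarrow> cd a = A \<Longrightarrow> cd b = B \<Longrightarrow> dm d = D \<Longrightarrow>
   dm h = TT A B \<Longrightarrow> cd h = D \<Longrightarrow>
   Cur C (dm a) (dm b) (cd d) (d \<cdot> (h \<cdot> (a \<otimes> b))) = VA (NA b) d \<cdot> (Cur C A B D h \<cdot> a)"
  using cur_nat[of a "dm a" A b "dm b" B d D "cd d" h] by (simp add: hom_def del: Vee_def VeeA_def)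

lemma curA: "ar a \<Longrightarrow> ar h \<Longrightarrow> cd a = A \<Longrightarrow> dm h = TT A B \<Longrightarrow> cd h = D \<Longrightarrow> ob B \<Longrightarrow>
   Cur C (dm a) B D (h \<cdot> (a \<otimes> ii B)) = Cur C A B D h \<cdot> a"
proof -
  assume a: "ar a" "ar h" "cd a = A" "dm h = TT A B" "cd h = D" "ob B"
  then have "ob D" "ob A" by auto
  then show ?thesis using a curN[of a "ii B" "ii D" h A B D] by simp
qed
lemma curD: "ar d \<Longrightarrow> ar h \<Longrightarrow> dm d = D \<Longrightarrow> dm h = TT A B \<Longrightarrow> cd h = D \<Longrightarrow> ob A \<Longrightarrow> ob B \<Longrightarrow>
   Cur C A B (cd d) (d \<cdot> h) = VA (ii (NN B)) d \<cdot> Cur C A B D h"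
proof -
  assume a: "ar d" "ar h" "dm d = D" "dm h = TT A B" "cd h = D" "ob A" "ob B"
  then show ?thesis using a curN[of "ii A" "ii B" d h A B D] by (simp del: Vee_def VeeA_def)
qed
lemma curB: "ar b \<Longrightarrow> ar h \<Longrightarrow> cd b = B \<Longrightarrow> dm h = TT A B \<Longrightarrow> cd h = D \<Longrightarrow> ob A \<Longrightarrow>
   Cur C A (dm b) D (h \<cdot> (ii A \<otimes> b)) = VA (NA b) (ii D) \<cdot> Cur C A B D h"
proof -
  assume a: "ar b" "ar h" "cd b = B" "dm h = TT A B" "cd h = D" "ob A"
  then have "ob D" "ob B" by auto
  then show ?thesis using a curN[of "ii A" b "ii D" h A B D] by (simp del: Vee_def VeeA_def)
qed

end

context SA begin

lemma ext2: "x \<cdot> y = z \<cdot> w \<Longrightarrow> ar y \<Longrightarrow> ar x \<Longrightarrow> cd y = dm x \<Longrightarrow> ar w \<Longrightarrow> ar z \<Longrightarrow> cd w = dm z \<Longrightarrow>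
   ar r \<Longrightarrow> cd r = dm y \<Longrightarrow> x \<cdot> (y \<cdot> r) = z \<cdot> (w \<cdot> r)"
proof -
  assume a: "x \<cdot> y = z \<cdot> w" "ar y" "ar x" "cd y = dm x" "ar w" "ar z" "cd w = dm z" "ar r" "cd r = dm y"
  have "dm y = dm w" using a(1-7) by (metis comp_dom)
  then have "x \<cdot> (y \<cdot> r) = (x \<cdot> y) \<cdot> r" "z \<cdot> (w \<cdot> r) = (z \<cdot> w) \<cdot> r" using a(2-9) by simp_all
  then show ?thesis using a(1) by simp
qed

lemma ext1: "x \<cdot> y = z \<Longrightarrow> ar y \<Longrightarrow> ar x \<Longrightarrow> cd y = dm x \<Longrightarrow> ar r \<Longrightarrow> cd r = dm y \<Longrightarrow>
   x \<cdot> (y \<cdot> r) = z \<cdot> r"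
proof -
  assume a: "x \<cdot> y = z" "ar y" "ar x" "cd y = dm x" "ar r" "cd r = dm y"
  have "x \<cdot> (y \<cdot> r) = (x \<cdot> y) \<cdot> r" using a(2-6) by simp
  then show ?thesis using a(1) by simp
qed

lemma cancel_ru: "ar x \<Longrightarrow> ar y \<Longrightarrow> dm x = dm y \<Longrightarrow> cd x = cd y \<Longrightarrow> x \<otimes> ii tu = y \<otimes> ii tu \<Longrightarrow> x = y"
proof -
  assume a: "ar x" "ar y" "dm x = dm y" "cd x = cd y" "x \<otimes> ii tu = y \<otimes> ii tu"
  have e: "u = ru (cd u) \<cdot> ((u \<otimes> ii tu) \<cdot> iv (ru (dm u)))" if "ar u" for u
  proof -
    have n: "u \<cdot> ru (dm u) = ru (cd u) \<cdot> (u \<otimes> ii tu)" using ru_nat that by simp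
    show ?thesis using that by (simp add: ext2[OF n[symmetric]])
  qed
  show ?thesis using e[of x] e[of y] a by metis
qed

lemma cancel_lu: "ar x \<Longrightarrow> ar y \<Longrightarrow> dm x = dm y \<Longrightarrow> cd x = cd y \<Longrightarrow> ii tu \<otimes> x = ii tu \<otimes> y \<Longrightarrow> x = y"
proof -
  assume a: "ar x" "ar y" "dm x = dm y" "cd x = cd y" "ii tu \<otimes> x = ii tu \<otimes> y"
  have e: "u = lu (cd u) \<cdot> ((ii tu \<otimes> u) \<cdot> iv (lu (dm u)))" if "ar u" for u
  proof -
    have n: "u \<cdot> lu (dm u) = lu (cd u) \<cdot> (ii tu \<otimes> u)" using lu_nat that by simp
    show ?thesis using that by (simp add: ext2[OF n[symmetric]])
  qed
  show ?thesis using e[of x] e[of y] a by metis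
qed

lemma ascN: "ar f \<Longrightarrow> ar g \<Longrightarrow> ar h \<Longrightarrow> cd f = A \<Longrightarrow> cd g = B \<Longrightarrow> cd h = D \<Longrightarrow>
   asc A B D \<cdot> ((f \<otimes> g) \<otimes> h) = (f \<otimes> (g \<otimes> h)) \<cdot> asc (dm f) (dm g) (dm h)"
  using asc_nat by blast

lemma K2pre:
  assumes ob: "ob A" "ob B" "ob D"
  shows "asc A B D \<cdot> (ru (TT A B) \<otimes> ii D) = asc A B D \<cdot> (((ii A \<otimes> ru B) \<cdot> asc A B tu) \<otimes> ii D)"
proof -
  have a: "(ii (TT A B) \<otimes> lu D) \<cdot> asc (TT A B) tu D = ru (TT A B) \<otimes> ii D" using triangle ob by simp
  have b: "asc A B D \<cdot> (ii (TT A B) \<otimes> lu D) = (ii A \<otimes> (ii B \<otimes> lu D)) \<cdot> asc A B (TT tu D)"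
    using ascN[of "ii A" "ii B" "lu D" A B D] ob by simp
  have c: "asc A B (TT tu D) \<cdot> asc (TT A B) tu D = (ii A \<otimes> asc B tu D) \<cdot> (asc A (TT B tu) D \<cdot> (asc A B tu \<otimes> ii D))"
    using pentagon ob by simp
  have d: "(ii B \<otimes> lu D) \<cdot> asc B tu D = ru B \<otimes> ii D" using triangle ob by simp
  have e: "asc A B D \<cdot> ((ii A \<otimes> ru B) \<otimes> ii D) = (ii A \<otimes> (ru B \<otimes> ii D)) \<cdot> asc A (TT B tu) D"
    using ascN[of "ii A" "ru B" "ii D" A B D] ob by simp
  have "asc A B D \<cdot> (ru (TT A B) \<otimes> ii D) = asc A B D \<cdot> ((ii (TT A B) \<otimes> lu D) \<cdot> asc (TT A B) tu D)"
    using a by simp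
  also have "\<dots> = (asc A B D \<cdot> (ii (TT A B) \<otimes> lu D)) \<cdot> asc (TT A B) tu D" using ob by simp
  also have "\<dots> = (ii A \<otimes> (ii B \<otimes> lu D)) \<cdot> (asc A B (TT tu D) \<cdot> asc (TT A B) tu D)" using b ob by simp
  also have "\<dots> = (ii A \<otimes> (ii B \<otimes> lu D)) \<cdot> ((ii A \<otimes> asc B tu D) \<cdot> (asc A (TT B tu) D \<cdot> (asc A B tu \<otimes> ii D)))"
    using c by simp
  also have "\<dots> = (ii A \<otimes> ((ii B \<otimes> lu D) \<cdot> asc B tu D)) \<cdot> (asc A (TT B tu) D \<cdot> (asc A B tu \<otimes> ii D))"
    using ob by simp
  also have "\<dots> = ((ii A \<otimes> (ru B \<otimes> ii D)) \<cdot> asc A (TT B tu) D) \<cdot> (asc A B tu \<otimes> ii D)"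
    using d ob by simp
  also have "\<dots> = asc A B D \<cdot> (((ii A \<otimes> ru B) \<cdot> asc A B tu) \<otimes> ii D)" using ob by (simp add: ext2[OF e[symmetric]])
  finally show ?thesis .
qed

lemma K2: "ob A \<Longrightarrow> ob B \<Longrightarrow> ru (TT A B) = (ii A \<otimes> ru B) \<cdot> asc A B tu"
proof -
  assume ob: "ob A" "ob B"
  have "ru (TT A B) \<otimes> ii tu = ((ii A \<otimes> ru B) \<cdot> asc A B tu) \<otimes> ii tu"
    using iso_cancel_left[of "asc A B tu" "ru (TT A B) \<otimes> ii tu" "((ii A \<otimes> ru B) \<cdot> asc A B tu) \<otimes> ii tu"]
      K2pre[of A B tu] ob by simp
  then show ?thesis using cancel_ru ob by simp
qed


lemma tn_iso[simp]: "isiso C f \<Longrightarrow> isiso C g \<Longrightarrow> isiso C (f \<otimes> g)"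
  using iso_unique(1)[of "f \<otimes> g" "iv f \<otimes> iv g"] by simp
lemma tn_iv[simp]: "isiso C f \<Longrightarrow> isiso C g \<Longrightarrow> iv (f \<otimes> g) = iv f \<otimes> iv g"
  using iso_unique(2)[of "f \<otimes> g" "iv f \<otimes> iv g"] by simp
lemma comp_iso[simp]: "isiso C f \<Longrightarrow> isiso C g \<Longrightarrow> cd f = dm g \<Longrightarrow> isiso C (g \<cdot> f)"
  using iso_unique(1)[of "g \<cdot> f" "iv f \<cdot> iv g"] by simp
lemma comp_iv[simp]: "isiso C f \<Longrightarrow> isiso C g \<Longrightarrow> cd f = dm g \<Longrightarrow> iv (g \<cdot> f) = iv f \<cdot> iv g"
  using iso_unique(2)[of "g \<cdot> f" "iv f \<cdot> iv g"] by simp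
lemma id_iso[simp]: "ob A \<Longrightarrow> isiso C (ii A)"
  using iso_unique(1)[of "ii A" "ii A"] by simp
lemma id_iv[simp]: "ob A \<Longrightarrow> iv (ii A) = ii A"
  using iso_unique(2)[of "ii A" "ii A"] by simp

lemma Tlem:
  assumes ob: "ob B" "ob D"
  shows "lu (TT B D) \<cdot> asc tu B D = lu B \<otimes> ii D"
proof -
  define A where "A = tu"
  have obA: "ob A" by (simp add: A_def)
  define P where "P = asc A (TT tu B) D \<cdot> (asc A tu B \<otimes> ii D)"
  have pent: "asc A tu (TT B D) \<cdot> asc (TT A tu) B D = (ii A \<otimes> asc tu B D) \<cdot> (asc A (TT tu B) D \<cdot> (asc A tu B \<otimes> ii D))"
    using pentagon ob obA by simp
  have tri1: "(ii A \<otimes> lu (TT B D)) \<cdot> asc A tu (TT B D) = ru A \<otimes> ii (TT B D)" using triangle ob obA by simp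
  have nat1: "asc A B D \<cdot> ((ru A \<otimes> ii B) \<otimes> ii D) = (ru A \<otimes> ii (TT B D)) \<cdot> asc (TT A tu) B D"
    using ascN[of "ru A" "ii B" "ii D" A B D] ob obA by simp
  have tri2: "(ii A \<otimes> lu B) \<cdot> asc A tu B = ru A \<otimes> ii B" using triangle ob obA by simp
  have nat2: "asc A B D \<cdot> ((ii A \<otimes> lu B) \<otimes> ii D) = (ii A \<otimes> (lu B \<otimes> ii D)) \<cdot> asc A (TT tu B) D"
    using ascN[of "ii A" "lu B" "ii D" A B D] ob obA by simp
  have "(ii A \<otimes> (lu (TT B D) \<cdot> asc tu B D)) \<cdot> P = (ii A \<otimes> lu (TT B D)) \<cdot> (asc A tu (TT B D) \<cdot> asc (TT A tu) B D)"
    unfolding P_def using ob obA by (simp add: pent ext2[OF pent])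
  also have "\<dots> = (ru A \<otimes> ii (TT B D)) \<cdot> asc (TT A tu) B D"
    using ob obA by (simp add: tri1 ext1[OF tri1])
  also have "\<dots> = asc A B D \<cdot> ((ru A \<otimes> ii B) \<otimes> ii D)" using nat1 by simp
  also have "\<dots> = asc A B D \<cdot> (((ii A \<otimes> lu B) \<cdot> asc A tu B) \<otimes> ii D)" using tri2 by simp
  also have "\<dots> = (ii A \<otimes> (lu B \<otimes> ii D)) \<cdot> P"
    unfolding P_def using ob obA by (simp add: nat2[symmetric] ext2[OF nat2[symmetric]])
  finally have eq: "(ii A \<otimes> (lu (TT B D) \<cdot> asc tu B D)) \<cdot> P = (ii A \<otimes> (lu B \<otimes> ii D)) \<cdot> P" .
  have "isiso C P" unfolding P_def using ob obA by simp
  then have "ii A \<otimes> (lu (TT B D) \<cdot> asc tu B D) = ii A \<otimes> (lu B \<otimes> ii D)"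
    using iso_cancel_right[OF _ _ _ _ _ eq] ob obA unfolding P_def by simp
  then show ?thesis using cancel_lu ob unfolding A_def by simp
qed

lemma K1: "lu tu = ru tu"
proof -
  have a: "(ii tu \<otimes> lu tu) \<cdot> asc tu tu tu = ru tu \<otimes> ii tu" using triangle by simp
  have b: "lu (TT tu tu) \<cdot> asc tu tu tu = lu tu \<otimes> ii tu" using Tlem by simp
  have c: "ii tu \<otimes> lu tu = lu (TT tu tu)"
  proof -
    have "lu tu \<cdot> (ii tu \<otimes> lu tu) = lu tu \<cdot> lu (TT tu tu)"
      using lu_nat[of "lu tu"] by simp
    then show ?thesis using iso_cancel_left[of "lu tu" "ii tu \<otimes> lu tu" "lu (TT tu tu)"] by simp
  qed
  have "ru tu \<otimes> ii tu = lu tu \<otimes> ii tu" using a b c by simp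
  then show ?thesis using cancel_ru by simp
qed


lemma conj_inv: "isiso C h \<Longrightarrow> isiso C h' \<Longrightarrow> ar u \<Longrightarrow> ar v \<Longrightarrow> cd h = dm v \<Longrightarrow> cd u = dm h' \<Longrightarrow>
   dm u = dm h \<Longrightarrow> cd v = cd h' \<Longrightarrow> h' \<cdot> u = v \<cdot> h \<Longrightarrow> iv h' \<cdot> v = u \<cdot> iv h"
proof -
  assume a: "isiso C h" "isiso C h'" "ar u" "ar v" "cd h = dm v" "cd u = dm h'" "dm u = dm h" "cd v = cd h'"
    "h' \<cdot> u = v \<cdot> h"
  have "iv h' \<cdot> v = iv h' \<cdot> ((v \<cdot> h) \<cdot> iv h)" using a(1-8) by simp
  also have "\<dots> = iv h' \<cdot> ((h' \<cdot> u) \<cdot> iv h)" using a(9) by simp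
  also have "\<dots> = u \<cdot> iv h" using a(1-8) by simp
  finally show ?thesis .
qed

lemma ascN_inv: "ar f \<Longrightarrow> ar g \<Longrightarrow> ar h \<Longrightarrow> cd f = A \<Longrightarrow> cd g = B \<Longrightarrow> cd h = D \<Longrightarrow>
   iv (asc A B D) \<cdot> (f \<otimes> (g \<otimes> h)) = ((f \<otimes> g) \<otimes> h) \<cdot> iv (asc (dm f) (dm g) (dm h))"
  by (rule conj_inv) (auto simp: ascN)

definition sh where "sh X Y Z = iv (asc X Z Y) \<cdot> ((ii X \<otimes> sw Y Z) \<cdot> asc X Y Z)"

lemma sh_ar[simp]: "ob X \<Longrightarrow> ob Y \<Longrightarrow> ob Z \<Longrightarrow> ar (sh X Y Z)" unfolding sh_def by simp
lemma sh_dom[simp]: "ob X \<Longrightarrow> ob Y \<Longrightarrow> ob Z \<Longrightarrow> dm (sh X Y Z) = TT (TT X Y) Z" unfolding sh_def by simp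
lemma sh_cod[simp]: "ob X \<Longrightarrow> ob Y \<Longrightarrow> ob Z \<Longrightarrow> cd (sh X Y Z) = TT (TT X Z) Y" unfolding sh_def by simp

lemma swN: "ar f \<Longrightarrow> ar g \<Longrightarrow> cd f = A \<Longrightarrow> cd g = B \<Longrightarrow> sw A B \<cdot> (f \<otimes> g) = (g \<otimes> f) \<cdot> sw (dm f) (dm g)"
  using sw_nat by blast

lemma sh_nat: "ar x \<Longrightarrow> ar y \<Longrightarrow> ar z \<Longrightarrow> cd x = X' \<Longrightarrow> cd y = Y' \<Longrightarrow> cd z = Z' \<Longrightarrow>
  sh X' Y' Z' \<cdot> ((x \<otimes> y) \<otimes> z) = ((x \<otimes> z) \<otimes> y) \<cdot> sh (dm x) (dm y) (dm z)"
proof -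
  assume a0: "ar x" "ar y" "ar z" "cd x = X'" "cd y = Y'" "cd z = Z'"
  then have "ob X'" "ob Y'" "ob Z'" by auto
  note a = a0 this
  have e1: "asc X' Y' Z' \<cdot> ((x \<otimes> y) \<otimes> z) = (x \<otimes> (y \<otimes> z)) \<cdot> asc (dm x) (dm y) (dm z)" using ascN a by blast
  have e2: "sw Y' Z' \<cdot> (y \<otimes> z) = (z \<otimes> y) \<cdot> sw (dm y) (dm z)" using swN a by blast
  have e3: "iv (asc X' Z' Y') \<cdot> (x \<otimes> (z \<otimes> y)) = ((x \<otimes> z) \<otimes> y) \<cdot> iv (asc (dm x) (dm z) (dm y))"
    using ascN_inv a by blast
  have "sh X' Y' Z' \<cdot> ((x \<otimes> y) \<otimes> z) = iv (asc X' Z' Y') \<cdot> ((ii X' \<otimes> sw Y' Z') \<cdot> ((x \<otimes> (y \<otimes> z)) \<cdot> asc (dm x) (dm y) (dm z)))"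
    unfolding sh_def using a by (simp add: e1 ext2[OF e1])
  also have "\<dots> = iv (asc X' Z' Y') \<cdot> ((x \<otimes> (z \<otimes> y)) \<cdot> ((ii (dm x) \<otimes> sw (dm y) (dm z)) \<cdot> asc (dm x) (dm y) (dm z)))"
    using a by (simp add: e2)
  also have "\<dots> = ((x \<otimes> z) \<otimes> y) \<cdot> sh (dm x) (dm y) (dm z)"
    unfolding sh_def using a by (simp del: tn_merge tn_merge2 add: e3 ext2[OF e3])
  finally show ?thesis .
qed

lemma ru_sw: "ob W \<Longrightarrow> ru W \<cdot> sw tu W = lu W"
proof -
  assume w: "ob W"
  have "ru W \<cdot> sw tu W = (lu W \<cdot> sw W tu) \<cdot> sw tu W" using ru_lu_sw w by simp
  also have "\<dots> = lu W" using w by simp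
  finally show ?thesis .
qed

lemma C1:
  assumes "ar G" "dm G = TT X W" "cd G = tu" "ob X" "ob W"
  shows "lu tu \<cdot> ((G \<otimes> ii tu) \<cdot> (sh X tu W \<cdot> (iv (ru X) \<otimes> ii W))) = G"
proof -
  have n: "ru tu \<cdot> (G \<otimes> ii tu) = G \<cdot> ru (TT X W)" using ru_nat[of G] assms by simp
  have k2: "ru (TT X W) = (ii X \<otimes> ru W) \<cdot> asc X W tu" using K2 assms by simp
  have tri: "(ii X \<otimes> lu W) \<cdot> asc X tu W = ru X \<otimes> ii W" using triangle assms by simp
  have "lu tu \<cdot> ((G \<otimes> ii tu) \<cdot> (sh X tu W \<cdot> (iv (ru X) \<otimes> ii W)))
     = G \<cdot> (ru (TT X W) \<cdot> (sh X tu W \<cdot> (iv (ru X) \<otimes> ii W)))"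
    using assms by (simp add: K1 n ext2[OF n])
  also have "\<dots> = G \<cdot> ((ii X \<otimes> (ru W \<cdot> sw tu W)) \<cdot> (asc X tu W \<cdot> (iv (ru X) \<otimes> ii W)))"
    unfolding k2 sh_def using assms by simp
  also have "\<dots> = G \<cdot> ((ru X \<otimes> ii W) \<cdot> (iv (ru X) \<otimes> ii W))"
    using assms by (simp add: ru_sw tri ext1[OF tri])
  also have "\<dots> = G" using assms by simp
  finally show ?thesis .
qed

lemma C2:
  assumes "ob Y"
  shows "lu Y \<cdot> ((ru tu \<otimes> ii Y) \<cdot> sh tu Y tu) = ru Y \<cdot> (lu Y \<otimes> ii tu)"
proof -
  have t1: "lu (TT tu Y) \<cdot> asc tu tu Y = lu tu \<otimes> ii Y" using Tlem assms by simp
  have t1': "(lu tu \<otimes> ii Y) \<cdot> iv (asc tu tu Y) = lu (TT tu Y)"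
  proof -
    have "(lu tu \<otimes> ii Y) \<cdot> iv (asc tu tu Y) = (lu (TT tu Y) \<cdot> asc tu tu Y) \<cdot> iv (asc tu tu Y)" using t1 by simp
    also have "\<dots> = lu (TT tu Y)" using assms by simp
    finally show ?thesis .
  qed
  have t2: "lu (TT Y tu) \<cdot> asc tu Y tu = lu Y \<otimes> ii tu" using Tlem assms by simp
  have n: "sw Y tu \<cdot> lu (TT Y tu) = lu (TT tu Y) \<cdot> (ii tu \<otimes> sw Y tu)" using lu_nat[of "sw Y tu"] assms by simp
  have "lu Y \<cdot> ((ru tu \<otimes> ii Y) \<cdot> sh tu Y tu) = lu Y \<cdot> (lu (TT tu Y) \<cdot> ((ii tu \<otimes> sw Y tu) \<cdot> asc tu Y tu))"
    unfolding sh_def using assms by (simp add: K1[symmetric] t1' ext1[OF t1'])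
  also have "\<dots> = lu Y \<cdot> (sw Y tu \<cdot> (lu Y \<otimes> ii tu))"
    using assms by (simp add: n[symmetric] ext2[OF n[symmetric]] t2)
  also have "\<dots> = ru Y \<cdot> (lu Y \<otimes> ii tu)" using assms by (simp add: ru_lu_sw)
  finally show ?thesis .
qed

end

context SA begin

lemma dnN: "ar x \<Longrightarrow> cd x = B \<Longrightarrow> x \<cdot> dn (dm x) = dn B \<cdot> NA (NA x)"
  using dn_nat by blast

lemma dn_expand: "ar x \<Longrightarrow> x = dn (cd x) \<cdot> (NA (NA x) \<cdot> iv (dn (dm x)))"
proof -
  assume a: "ar x"
  have n: "x \<cdot> dn (dm x) = dn (cd x) \<cdot> NA (NA x)" using dnN a by blast
  have "x = (x \<cdot> dn (dm x)) \<cdot> iv (dn (dm x))" using a by simp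
  also have "\<dots> = dn (cd x) \<cdot> (NA (NA x) \<cdot> iv (dn (dm x)))" using a by (simp only: n) simp
  finally show ?thesis .
qed

lemma ng_faithful: "ar a \<Longrightarrow> ar b \<Longrightarrow> dm a = dm b \<Longrightarrow> cd a = cd b \<Longrightarrow> NA a = NA b \<Longrightarrow> a = b"
  using dn_expand by metis

lemma ng_full: "ar \<phi> \<Longrightarrow> dm \<phi> = NN Y \<Longrightarrow> cd \<phi> = NN X \<Longrightarrow> ob X \<Longrightarrow> ob Y \<Longrightarrow>
  \<exists>x. ar x \<and> dm x = X \<and> cd x = Y \<and> NA x = \<phi>"
proof -
  assume a: "ar \<phi>" "dm \<phi> = NN Y" "cd \<phi> = NN X" "ob X" "ob Y"
  define x where "x = dn Y \<cdot> (NA \<phi> \<cdot> iv (dn X))"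
  have x: "ar x" "dm x = X" "cd x = Y" unfolding x_def using a by simp_all
  have "NA (NA x) = NA \<phi>"
  proof -
    have "NA (NA x) = iv (dn Y) \<cdot> (x \<cdot> dn X)"
      using dnN[of x Y] x a by simp
    also have "\<dots> = NA \<phi>" unfolding x_def using a by simp
    finally show ?thesis .
  qed
  then have "NA x = \<phi>" using ng_faithful[of "NA x" \<phi>] x a by simp
  then show ?thesis using x by blast
qed

lemma ng_iso[simp]: "isiso C f \<Longrightarrow> isiso C (NA f)"
  using iso_unique(1)[of "NA f" "NA (iv f)"] by simp
lemma ng_iv[simp]: "isiso C f \<Longrightarrow> iv (NA f) = NA (iv f)"
  using iso_unique(2)[of "NA f" "NA (iv f)"] by simp

lemma lu_nat_inv: "ar g \<Longrightarrow> cd g = B \<Longrightarrow> iv (lu B) \<cdot> g = (ii tu \<otimes> g) \<cdot> iv (lu (dm g))"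
  by (rule conj_inv) (auto simp: lu_nat)
lemma ru_nat_inv: "ar g \<Longrightarrow> cd g = B \<Longrightarrow> iv (ru B) \<cdot> g = (g \<otimes> ii tu) \<cdot> iv (ru (dm g))"
  by (rule conj_inv) (auto simp: ru_nat)
lemma dn_nat_inv: "ar g \<Longrightarrow> cd g = B \<Longrightarrow> iv (dn B) \<cdot> g = NA (NA g) \<cdot> iv (dn (dm g))"
  by (rule conj_inv) (auto simp: dnN)

lemma iv_iso[simp]: "isiso C f \<Longrightarrow> isiso C (iv f)"
  using iso_unique(1)[of "iv f" f] by simp
lemma iv_iv[simp]: "isiso C f \<Longrightarrow> iv (iv f) = f"
  using iso_unique(2)[of "iv f" f] by simp

definition tau where "tau A = (iv (dn tu) \<otimes> ii (NN A)) \<cdot> iv (lu (NN A))"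
lemma tau_ar[simp]: "ob A \<Longrightarrow> ar (tau A)" unfolding tau_def by simp
lemma tau_dom[simp]: "ob A \<Longrightarrow> dm (tau A) = NN A" unfolding tau_def by simp
lemma tau_cod[simp]: "ob A \<Longrightarrow> cd (tau A) = TT (NN (NN tu)) (NN A)" unfolding tau_def by simp
lemma tau_iso[simp]: "ob A \<Longrightarrow> isiso C (tau A)" unfolding tau_def by simp

lemma RUv_eq: "RUv C A = dn A \<cdot> NA (tau A)" unfolding RUv_def tau_def by simp
lemma RUv_ar[simp]: "ob A \<Longrightarrow> ar (RUv C A)" unfolding RUv_eq by simp
lemma RUv_dom[simp]: "ob A \<Longrightarrow> dm (RUv C A) = VV A fo" unfolding RUv_eq by simp
lemma RUv_cod[simp]: "ob A \<Longrightarrow> cd (RUv C A) = A" unfolding RUv_eq by simp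
lemma RUv_iso[simp]: "ob A \<Longrightarrow> isiso C (RUv C A)" unfolding RUv_eq by simp

lemma RUv_nat: "ar x \<Longrightarrow> dm x = A \<Longrightarrow> cd x = A' \<Longrightarrow> RUv C A' \<cdot> VA x (ii fo) = x \<cdot> RUv C A"
proof -
  assume a0: "ar x" "dm x = A" "cd x = A'"
  then have "ob A" "ob A'" by auto
  note a = a0 this
  have n1: "x \<cdot> dn A = dn A' \<cdot> NA (NA x)" using dnN a by blast
  have n2: "iv (lu (NN A)) \<cdot> NA x = (ii tu \<otimes> NA x) \<cdot> iv (lu (NN A'))" using lu_nat_inv[of "NA x" "NN A"] a by simp
  show ?thesis unfolding RUv_eq tau_def using a
    by (simp add: n1 ext2[OF n1] n2 ext2[OF n2])
qed

end


locale BB = SA +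
  assumes dup_hom: "A \<in> Ob C \<Longrightarrow> Dup C A \<in> hom C A (Tn C A A)"
  and del_hom: "A \<in> Ob C \<Longrightarrow> Del C A \<in> hom C A (Tu C)"
  and cocomm: "A \<in> Ob C \<Longrightarrow> Cmp C (Sw C A A) (Dup C A) = Dup C A"
  and counit: "A \<in> Ob C \<Longrightarrow> Cmp C (RU C A) (Cmp C (TnA C (IdA C A) (Del C A)) (Dup C A)) = IdA C A"
  and smix: "Del C (Fo C) = Cou C (Tu C)"
begin

abbreviation dup where "dup A \<equiv> Dup C A"
abbreviation del where "del A \<equiv> Del C A"
abbreviation ee where "ee \<equiv> Del C (NN tu)"

lemma dup_ar[simp]: "ob A \<Longrightarrow> ar (dup A)" using dup_hom by (simp add: hom_def)
lemma dup_dom[simp]: "ob A \<Longrightarrow> dm (dup A) = A" using dup_hom by (simp add: hom_def)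
lemma dup_cod[simp]: "ob A \<Longrightarrow> cd (dup A) = TT A A" using dup_hom by (simp add: hom_def)
lemma del_ar[simp]: "ob A \<Longrightarrow> ar (del A)" using del_hom by (simp add: hom_def)
lemma del_dom[simp]: "ob A \<Longrightarrow> dm (del A) = A" using del_hom by (simp add: hom_def)
lemma del_cod[simp]: "ob A \<Longrightarrow> cd (del A) = tu" using del_hom by (simp add: hom_def)

lemma vv_ob[simp]: "ob A \<Longrightarrow> ob B \<Longrightarrow> ob (VV A B)" by simp
lemma va_ar[simp]: "ar f \<Longrightarrow> ar g \<Longrightarrow> ar (VA f g)" by simp
lemma va_dom[simp]: "ar f \<Longrightarrow> ar g \<Longrightarrow> dm (VA f g) = VV (dm f) (dm g)" by simp
lemma va_cod[simp]: "ar f \<Longrightarrow> ar g \<Longrightarrow> cd (VA f g) = VV (cd f) (cd g)" by simp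
lemma ext3: "x \<cdot> (y \<cdot> z) = u \<Longrightarrow> ar x \<Longrightarrow> ar y \<Longrightarrow> ar z \<Longrightarrow> cd z = dm y \<Longrightarrow> cd y = dm x \<Longrightarrow>
   ar r \<Longrightarrow> cd r = dm z \<Longrightarrow> x \<cdot> (y \<cdot> (z \<cdot> r)) = u \<cdot> r"
proof -
  assume a: "x \<cdot> (y \<cdot> z) = u" "ar x" "ar y" "ar z" "cd z = dm y" "cd y = dm x" "ar r" "cd r = dm z"
  have "x \<cdot> (y \<cdot> (z \<cdot> r)) = (x \<cdot> (y \<cdot> z)) \<cdot> r" using a(2-8) by simp
  then show ?thesis using a(1) by simp
qed

lemma rcounit: "ob A \<Longrightarrow> ru A \<cdot> ((ii A \<otimes> del A) \<cdot> dup A) = ii A" using counit by simp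
lemma lcounit: "ob A \<Longrightarrow> lu A \<cdot> ((del A \<otimes> ii A) \<cdot> dup A) = ii A"
proof -
  assume a: "ob A"
  have s: "sw A tu \<cdot> (ii A \<otimes> del A) = (del A \<otimes> ii A) \<cdot> sw A A" using swN[of "ii A" "del A" A tu] a by simp
  have "lu A \<cdot> ((del A \<otimes> ii A) \<cdot> dup A) = lu A \<cdot> ((del A \<otimes> ii A) \<cdot> (sw A A \<cdot> dup A))" using cocomm a by simp
  also have "\<dots> = (lu A \<cdot> sw A tu) \<cdot> ((ii A \<otimes> del A) \<cdot> dup A)" using a by (simp add: s[symmetric] ext2[OF s[symmetric]])
  also have "\<dots> = ii A" using a rcounit by (simp add: ru_lu_sw[symmetric])
  finally show ?thesis .
qed

lemma smix': "ee = dn tu \<cdot> NA ee" using smix unfolding Cou_def by simp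

definition eps where "eps A = ev C (NN A) (NN tu) \<cdot> ((VA (iv (dn A)) (ii (NN tu)) \<cdot> iv (RUv C A)) \<otimes> ii (NN A))"
lemma eps_ar[simp]: "ob A \<Longrightarrow> ar (eps A)" unfolding eps_def by simp
lemma eps_dom[simp]: "ob A \<Longrightarrow> dm (eps A) = TT A (NN A)" unfolding eps_def by simp
lemma eps_cod[simp]: "ob A \<Longrightarrow> cd (eps A) = NN tu" unfolding eps_def by simp

lemma cur_eps: "ob A \<Longrightarrow> Cur C A (NN A) (NN tu) (eps A) = VA (iv (dn A)) (ii (NN tu)) \<cdot> iv (RUv C A)"
proof -
  assume a: "ob A"
  let ?a = "VA (iv (dn A)) (ii (NN tu)) \<cdot> iv (RUv C A)"
  have "Cur C (dm ?a) (NN A) (NN tu) (ev C (NN A) (NN tu) \<cdot> (?a \<otimes> ii (NN A))) =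
     Cur C (VV (NN (NN A)) (NN tu)) (NN A) (NN tu) (ev C (NN A) (NN tu)) \<cdot> ?a"
    by (rule curA) (use a in simp_all)
  also have "\<dots> = ?a" using cur_ev[of "NN A" "NN tu"] a by simp
  finally show ?thesis unfolding eps_def using a by simp
qed

definition KK where "KK A B = lu B \<cdot> (((ee \<cdot> eps A) \<otimes> ii B) \<cdot> sh A B (NN A))"
lemma KK_ar[simp]: "ob A \<Longrightarrow> ob B \<Longrightarrow> ar (KK A B)" unfolding KK_def by simp
lemma KK_dom[simp]: "ob A \<Longrightarrow> ob B \<Longrightarrow> dm (KK A B) = TT (TT A B) (NN A)" unfolding KK_def by simp
lemma KK_cod[simp]: "ob A \<Longrightarrow> ob B \<Longrightarrow> cd (KK A B) = B" unfolding KK_def by simp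

lemma MIX:
  assumes obs: "ob A" "ob B"
  shows "mix C A B = VA (dn A) (ii B) \<cdot> Cur C (TT A B) (NN A) B (KK A B)"
proof -
  define nA where "nA = NN A"
  define X where "X = TT (VV A fo) B"
  define k where "k = ((ev C nA fo \<cdot> (VA (iv (dn A)) (ii fo) \<otimes> ii nA)) \<otimes> ii B) \<cdot> sh (VV A fo) B nA"
  have m: "mix C A B = VA (ii A) (lu B) \<cdot> (VA (ii A) (ee \<otimes> ii B) \<cdot>
      ((VA (dn A) (ii (TT fo B)) \<cdot> Cur C X nA (TT fo B) k) \<cdot> (iv (RUv C A) \<otimes> ii B)))"
    unfolding mix_def switch_def Let_def k_def sh_def X_def nA_def Fo_def by (rule refl)
  have ob2: "ob nA" "ob X" unfolding nA_def X_def using obs by simp_all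
  have kt: "ar k" "dm k = TT X nA" "cd k = TT fo B" unfolding k_def X_def nA_def using obs by simp_all
  define h1 where "h1 = k \<cdot> ((iv (RUv C A) \<otimes> ii B) \<otimes> ii nA)"
  have h1t: "ar h1" "dm h1 = TT (TT A B) nA" "cd h1 = TT fo B" unfolding h1_def using obs kt ob2
    by (simp_all add: X_def)
  have E1: "Cur C X nA (TT fo B) k \<cdot> (iv (RUv C A) \<otimes> ii B) = Cur C (TT A B) nA (TT fo B) h1"
    unfolding h1_def using curA[of "iv (RUv C A) \<otimes> ii B" k X nA "TT fo B"] obs kt ob2 by (simp add: X_def)
  define d where "d = lu B \<cdot> (ee \<otimes> ii B)"
  have dt: "ar d" "dm d = TT fo B" "cd d = B" unfolding d_def using obs by simp_all
  define c1 where "c1 = Cur C (TT A B) nA (TT fo B) h1"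
  have c1t: "ar c1" "dm c1 = TT A B" "cd c1 = VV (NN nA) (TT fo B)"
    unfolding c1_def using h1t obs ob2 by (simp_all del: Vee_def)
  have E2: "Cur C (TT A B) nA B (d \<cdot> h1) = VA (ii (NN nA)) d \<cdot> c1"
    unfolding c1_def using curD[of d h1 "TT fo B" "TT A B" nA] dt h1t obs ob2 by simp
  have m2: "mix C A B = VA (ii A) (lu B) \<cdot> (VA (ii A) (ee \<otimes> ii B) \<cdot> (VA (dn A) (ii (TT fo B)) \<cdot>
      (Cur C X nA (TT fo B) k \<cdot> (iv (RUv C A) \<otimes> ii B))))"
    unfolding m using obs ob2 kt unfolding nA_def by (simp add: X_def)
  have "mix C A B = VA (ii A) (lu B) \<cdot> (VA (ii A) (ee \<otimes> ii B) \<cdot> (VA (dn A) (ii (TT fo B)) \<cdot> c1))"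
    unfolding m2 E1 c1_def by (rule refl)
  also have "\<dots> = VA (dn A) (ii B) \<cdot> (VA (ii (NN nA)) d \<cdot> c1)"
    using obs ob2 kt c1t unfolding nA_def d_def by simp
  also have "\<dots> = VA (dn A) (ii B) \<cdot> Cur C (TT A B) nA B (d \<cdot> h1)" unfolding E2 by simp
  also have "d \<cdot> h1 = KK A B"
  proof -
    have sn: "sh (VV A fo) B nA \<cdot> ((iv (RUv C A) \<otimes> ii B) \<otimes> ii nA) = ((iv (RUv C A) \<otimes> ii nA) \<otimes> ii B) \<cdot> sh A B nA"
      using sh_nat[of "iv (RUv C A)" "ii B" "ii nA" "VV A fo" B nA] obs ob2 by simp
    note sn' = sn[unfolded Vee_def Fo_def nA_def]
    show ?thesis unfolding d_def h1_def k_def KK_def eps_def nA_def using obs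
      by (simp add: sn' ext2[OF sn'])
  qed
  finally show ?thesis unfolding nA_def .
qed


lemma D1:
  assumes x: "ar x" "dm x = A" "cd x = A'"
  shows "eps A \<cdot> (ii A \<otimes> NA x) = eps A' \<cdot> (x \<otimes> ii (NN A'))"
proof -
  have ob: "ob A" "ob A'" using x by auto
  have r: "RUv C A' \<cdot> VA x (ii fo) = x \<cdot> RUv C A" using RUv_nat x by blast
  have r': "iv (RUv C A') \<cdot> x = VA x (ii fo) \<cdot> iv (RUv C A)"
    by (rule conj_inv) (use x ob r in simp_all)
  have r'': "iv (RUv C A') \<cdot> x = NA (ii (NN (NN tu)) \<otimes> NA x) \<cdot> iv (RUv C A)" using r' by simp
  have dni: "iv (dn A') \<cdot> x = NA (NA x) \<cdot> iv (dn A)" using dn_nat_inv x by simp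
  have c1: "Cur C A (NN A') (NN tu) (eps A \<cdot> (ii A \<otimes> NA x)) = VA (NA (NA x)) (ii (NN tu)) \<cdot> Cur C A (NN A) (NN tu) (eps A)"
    using curB[of "NA x" "eps A" "NN A" A "NN tu"] x ob by simp
  have c2: "Cur C A (NN A') (NN tu) (eps A' \<cdot> (x \<otimes> ii (NN A'))) = Cur C A' (NN A') (NN tu) (eps A') \<cdot> x"
    using curA[of x "eps A'" A' "NN A'" "NN tu"] x ob by simp
  have "Cur C A (NN A') (NN tu) (eps A \<cdot> (ii A \<otimes> NA x)) = Cur C A (NN A') (NN tu) (eps A' \<cdot> (x \<otimes> ii (NN A')))"
    unfolding c1 c2 cur_eps[OF ob(1)] cur_eps[OF ob(2)] using x ob
    by (simp add: r'' ext2[OF r''] dni)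
  then show ?thesis using cur_inj[of "eps A \<cdot> (ii A \<otimes> NA x)" A "NN A'" "NN tu" "eps A' \<cdot> (x \<otimes> ii (NN A'))"] x ob
    by simp
qed

lemma iv_ru_dup: "ob A \<Longrightarrow> iv (ru A) = (ii A \<otimes> del A) \<cdot> dup A"
proof -
  assume a: "ob A"
  have "iv (ru A) = iv (ru A) \<cdot> (ru A \<cdot> ((ii A \<otimes> del A) \<cdot> dup A))" using rcounit a by simp
  also have "\<dots> = (ii A \<otimes> del A) \<cdot> dup A" using a by simp
  finally show ?thesis .
qed

lemma shX:
  assumes f: "ar f" "dm f = A" "cd f = tu" and W: "ob W"
  shows "sh tu tu W \<cdot> (((f \<otimes> del A) \<cdot> dup A) \<otimes> ii W) = ((f \<otimes> ii W) \<otimes> del A) \<cdot> (sh A A W \<cdot> (dup A \<otimes> ii W))"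
proof -
  have ob: "ob A" using f by auto
  have e: "((f \<otimes> del A) \<cdot> dup A) \<otimes> ii W = ((f \<otimes> del A) \<otimes> ii W) \<cdot> (dup A \<otimes> ii W)"
    using f ob W by simp
  have n: "sh tu tu W \<cdot> ((f \<otimes> del A) \<otimes> ii W) = ((f \<otimes> ii W) \<otimes> del A) \<cdot> sh A A W"
    using sh_nat[of f "del A" "ii W" tu tu W] f ob W by simp
  show ?thesis unfolding e using f ob W by (simp del: tn_merge tn_merge2 add: n ext2[OF n])
qed

lemma C1':
  assumes "ar G" "dm G = TT tu W" "cd G = tu" "ob W" "ar f" "cd f = tu"
  shows "lu tu \<cdot> ((G \<otimes> ii tu) \<cdot> (sh tu tu W \<cdot> ((iv (ru tu) \<cdot> f) \<otimes> ii W))) = G \<cdot> (f \<otimes> ii W)"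
proof -
  have c: "lu tu \<cdot> ((G \<otimes> ii tu) \<cdot> (sh tu tu W \<cdot> (iv (ru tu) \<otimes> ii W))) = G" using C1[of G tu W] assms by simp
  have e: "(iv (ru tu) \<cdot> f) \<otimes> ii W = (iv (ru tu) \<otimes> ii W) \<cdot> (f \<otimes> ii W)" using assms by simp
  have "lu tu \<cdot> ((G \<otimes> ii tu) \<cdot> (sh tu tu W \<cdot> ((iv (ru tu) \<cdot> f) \<otimes> ii W))) =
      (lu tu \<cdot> ((G \<otimes> ii tu) \<cdot> (sh tu tu W \<cdot> (iv (ru tu) \<otimes> ii W)))) \<cdot> (f \<otimes> ii W)"
    unfolding e using assms by (simp del: tn_merge tn_merge2)
  then show ?thesis using c by simp
qed

theorem part1:
  assumes f: "ar f" "dm f = A" "cd f = tu"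
  shows "plus C f (del A) = f"
proof -
  have ob: "ob A" using f by auto
  define Nt where "Nt = NN tu"
  have obN: "ob Nt" unfolding Nt_def by simp
  define G where "G = ee \<cdot> eps tu"
  have Gt: "ar G" "dm G = TT tu Nt" "cd G = tu" unfolding G_def Nt_def by simp_all
  define H where "H = del A \<cdot> (KK A A \<cdot> (ii (TT A A) \<otimes> NA f))"
  have Ht: "ar H" "dm H = TT (TT A A) Nt" "cd H = tu" unfolding H_def Nt_def using f ob by simp_all
  have S4: "H \<cdot> (dup A \<otimes> ii Nt) = G \<cdot> (f \<otimes> ii Nt)"
  proof -
    have ln: "del A \<cdot> lu A = lu tu \<cdot> (ii tu \<otimes> del A)" using lu_nat[of "del A"] ob by simp
    have sn1: "sh A A (NN A) \<cdot> (ii (TT A A) \<otimes> NA f) = ((ii A \<otimes> NA f) \<otimes> ii A) \<cdot> sh A A Nt"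
      using sh_nat[of "ii A" "ii A" "NA f" A A "NN A"] f ob unfolding Nt_def by simp
    have d1: "eps A \<cdot> (ii A \<otimes> NA f) = eps tu \<cdot> (f \<otimes> ii Nt)" using D1[OF f] unfolding Nt_def by simp
    have sx: "sh tu tu Nt \<cdot> (((f \<otimes> del A) \<cdot> dup A) \<otimes> ii Nt) = ((f \<otimes> ii Nt) \<otimes> del A) \<cdot> (sh A A Nt \<cdot> (dup A \<otimes> ii Nt))"
      using shX[OF f obN] .
    have rr: "(f \<otimes> del A) \<cdot> dup A = iv (ru tu) \<cdot> f"
    proof -
      have "(f \<otimes> del A) \<cdot> dup A = (f \<otimes> ii tu) \<cdot> ((ii A \<otimes> del A) \<cdot> dup A)" using f ob by simp
      also have "\<dots> = (f \<otimes> ii tu) \<cdot> iv (ru A)" using iv_ru_dup ob by simp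
      also have "\<dots> = iv (ru tu) \<cdot> f" using ru_nat_inv[of f tu] f by simp
      finally show ?thesis .
    qed
    have "H \<cdot> (dup A \<otimes> ii Nt) = lu tu \<cdot> ((G \<otimes> ii tu) \<cdot> (((f \<otimes> ii Nt) \<otimes> del A) \<cdot> (sh A A Nt \<cdot> (dup A \<otimes> ii Nt))))"
      unfolding H_def KK_def G_def using f ob obN
      by (simp add: ln ext2[OF ln] sn1[unfolded Nt_def] ext2[OF sn1[unfolded Nt_def]] d1[unfolded Nt_def] Nt_def)
    also have "\<dots> = lu tu \<cdot> ((G \<otimes> ii tu) \<cdot> (sh tu tu Nt \<cdot> (((f \<otimes> del A) \<cdot> dup A) \<otimes> ii Nt)))"
      by (simp only: sx)
    also have "\<dots> = G \<cdot> (f \<otimes> ii Nt)" unfolding rr using C1'[of G Nt f] Gt f obN by simp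
    finally show ?thesis .
  qed
  define c0 where "c0 = Cur C (TT A A) (NN A) A (KK A A)"
  have c0t: "ar c0" "dm c0 = TT A A" "cd c0 = VV (NN (NN A)) A" unfolding c0_def using ob by (simp_all del: Vee_def)
  have p0: "plus C f (del A) = Nab C tu \<cdot> (VA f (del A) \<cdot> (VA (dn A) (ii A) \<cdot> c0) \<cdot> dup A)"
    using f ob c0t by (simp add: plus_def MIX[OF ob ob] c0_def[symmetric] del: Vee_def VeeA_def)
  have S2: "Cur C (TT A A) Nt tu H = VA (NA (NA f)) (del A) \<cdot> c0"
    using curN[of "ii (TT A A)" "NA f" "del A" "KK A A" "TT A A" "NN A" A] f ob unfolding H_def c0_def Nt_def
    by (simp del: Vee_def VeeA_def)
  have dnf: "f \<cdot> dn A = dn tu \<cdot> NA (NA f)" using dnN f by blast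
  have S1: "VA f (del A) \<cdot> (VA (dn A) (ii A) \<cdot> c0) = VA (dn tu) (ii tu) \<cdot> Cur C (TT A A) Nt tu H"
    unfolding S2 using f ob c0t by (simp add: dnf)
  have S3: "Cur C (TT A A) Nt tu H \<cdot> dup A = Cur C A Nt tu (H \<cdot> (dup A \<otimes> ii Nt))"
    using curA[of "dup A" H "TT A A" Nt tu] Ht ob obN by simp
  have S5: "Cur C A Nt tu (G \<cdot> (f \<otimes> ii Nt)) = VA (ii (NN Nt)) ee \<cdot> (Cur C tu Nt Nt (eps tu) \<cdot> f)"
    using curN[of f "ii Nt" ee "eps tu" tu Nt Nt] f ob unfolding G_def Nt_def by (simp del: Vee_def VeeA_def)
  have ctu: "Cur C tu Nt Nt (eps tu) = VA (iv (dn tu)) (ii Nt) \<cdot> iv (RUv C tu)"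
    using cur_eps[of tu] unfolding Nt_def by simp
  have "plus C f (del A) = Nab C tu \<cdot> (VA (dn tu) (ii tu) \<cdot> (Cur C (TT A A) Nt tu H \<cdot> dup A))"
    unfolding p0 using f ob c0t Ht obN by (simp add: ext3[OF S1] Nt_def del: Vee_def VeeA_def)
  also have "\<dots> = Nab C tu \<cdot> (VA (dn tu) (ii tu) \<cdot> (VA (ii (NN Nt)) ee \<cdot> (VA (iv (dn tu)) (ii Nt) \<cdot> (iv (RUv C tu) \<cdot> f))))"
    unfolding S3 S4 S5 ctu using f ob obN by (simp add: Nt_def del: Vee_def VeeA_def)
  also have "\<dots> = f"
    unfolding Nab_def RUv_eq tau_def Nt_def using f ob by (simp add: smix'[symmetric] lcounit)
  finally show ?thesis .
qed

end

context SA begin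

lemma va_ar2[simp]: "ar f \<Longrightarrow> ar g \<Longrightarrow> ar (VA f g)" by simp
lemma va_dom2[simp]: "ar f \<Longrightarrow> ar g \<Longrightarrow> dm (VA f g) = VV (dm f) (dm g)" by simp
lemma va_cod2[simp]: "ar f \<Longrightarrow> ar g \<Longrightarrow> cd (VA f g) = VV (cd f) (cd g)" by simp

definition sg where "sg X c = ru X \<cdot> ((ii X \<otimes> c) \<cdot> iv (ru X))"
abbreviation "isc c \<equiv> ar c \<and> dm c = tu \<and> cd c = tu"

lemma sg_ar[simp]: "ob X \<Longrightarrow> ar c \<Longrightarrow> dm c = tu \<Longrightarrow> cd c = tu \<Longrightarrow> ar (sg X c)" unfolding sg_def by simp
lemma sg_dom[simp]: "ob X \<Longrightarrow> ar c \<Longrightarrow> dm c = tu \<Longrightarrow> cd c = tu \<Longrightarrow> dm (sg X c) = X" unfolding sg_def by simp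
lemma sg_cod[simp]: "ob X \<Longrightarrow> ar c \<Longrightarrow> dm c = tu \<Longrightarrow> cd c = tu \<Longrightarrow> cd (sg X c) = X" unfolding sg_def by simp

lemma S1: "ar x \<Longrightarrow> dm x = X \<Longrightarrow> cd x = Y \<Longrightarrow> isc c \<Longrightarrow> x \<cdot> sg X c = sg Y c \<cdot> x"
proof -
  assume a0: "ar x" "dm x = X" "cd x = Y" "isc c"
  then have "ob X" "ob Y" by auto
  note a = a0 this
  have n1: "x \<cdot> ru X = ru Y \<cdot> (x \<otimes> ii tu)" using ru_nat[of x] a by simp
  have n2: "iv (ru Y) \<cdot> x = (x \<otimes> ii tu) \<cdot> iv (ru X)" using ru_nat_inv[of x Y] a by simp
  show ?thesis unfolding sg_def using a by (simp add: n1 ext2[OF n1] n2)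
qed

lemma S3: "isc c \<Longrightarrow> sg tu c = c"
proof -
  assume a: "isc c"
  have n: "c \<cdot> lu tu = lu tu \<cdot> (ii tu \<otimes> c)" using lu_nat[of c] a by simp
  show ?thesis unfolding sg_def K1[symmetric] using a by (simp add: n[symmetric] ext2[OF n[symmetric]])
qed

lemma Stn1: "ob A \<Longrightarrow> ob B \<Longrightarrow> isc c \<Longrightarrow> ii A \<otimes> sg B c = sg (TT A B) c"
proof -
  assume a: "ob A" "ob B" "isc c"
  have k: "ru (TT A B) = (ii A \<otimes> ru B) \<cdot> asc A B tu" using K2 a by simp
  have ki: "iv (ru (TT A B)) = iv (asc A B tu) \<cdot> (ii A \<otimes> iv (ru B))" using a unfolding k by simp
  have n: "asc A B tu \<cdot> (ii (TT A B) \<otimes> c) = (ii A \<otimes> (ii B \<otimes> c)) \<cdot> asc A B tu"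
    using ascN[of "ii A" "ii B" c A B tu] a by simp
  show ?thesis unfolding sg_def k ki using a by (simp add: n ext2[OF n])
qed

lemma Stn2: "ob A \<Longrightarrow> ob B \<Longrightarrow> isc c \<Longrightarrow> sg A c \<otimes> ii B = sg (TT A B) c"
proof -
  assume a: "ob A" "ob B" "isc c"
  have s1: "sw A B \<cdot> sg (TT A B) c = sg (TT B A) c \<cdot> sw A B" using S1[of "sw A B" "TT A B" "TT B A" c] a by simp
  have s2: "sw B A \<cdot> (ii B \<otimes> sg A c) = (sg A c \<otimes> ii B) \<cdot> sw B A" using swN[of "ii B" "sg A c" B A] a by simp
  have "sg (TT A B) c = sw B A \<cdot> (sw A B \<cdot> sg (TT A B) c)" using a by simp
  also have "\<dots> = sw B A \<cdot> ((ii B \<otimes> sg A c) \<cdot> sw A B)" unfolding s1 Stn1[OF a(2) a(1) a(3)] by simp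
  also have "\<dots> = sg A c \<otimes> ii B" using a by (simp del: tn_merge tn_merge2 add: s2 ext2[OF s2])
  finally show ?thesis by simp
qed

lemma S2a: "ob B \<Longrightarrow> ob D \<Longrightarrow> isc c \<Longrightarrow> VA (NA (sg B c)) (ii D) = sg (VV (NN B) D) c"
proof -
  assume a: "ob B" "ob D" "isc c"
  define H where "H = VV (NN B) D"
  have obH: "ob H" unfolding H_def using a by simp
  have e1: "ev C B D \<cdot> (ii H \<otimes> sg B c) = ev C B D \<cdot> (sg H c \<otimes> ii B)"
    using Stn1[of H B c] Stn2[of H B c] obH a by simp
  have c1: "Cur C H B D (ev C B D \<cdot> (ii H \<otimes> sg B c)) = VA (NA (sg B c)) (ii D) \<cdot> Cur C H B D (ev C B D)"
    using curB[of "sg B c" "ev C B D" B H D] a obH unfolding H_def by (simp del: Vee_def VeeA_def)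
  have c2: "Cur C H B D (ev C B D \<cdot> (sg H c \<otimes> ii B)) = Cur C H B D (ev C B D) \<cdot> sg H c"
    using curA[of "sg H c" "ev C B D" H B D] a obH unfolding H_def by (simp del: Vee_def VeeA_def)
  have ce: "Cur C H B D (ev C B D) = ii H" unfolding H_def using cur_ev a by simp
  show ?thesis using c1 c2 ce e1 a obH unfolding H_def by (simp del: Vee_def VeeA_def)
qed

lemma S2: "ob Y \<Longrightarrow> isc c \<Longrightarrow> NA (sg Y c) = sg (NN Y) c"
proof -
  assume a: "ob Y" "isc c"
  define W where "W = TT (NN (NN Y)) (NN (NN tu))"
  define w where "w = ru Y \<cdot> (dn Y \<otimes> dn tu)"
  have wt: "ar w" "dm w = W" "cd w = Y" "isiso C w" unfolding w_def W_def using a by simp_all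
  have obW: "ob W" unfolding W_def using a by simp
  have nn: "NA (NA (sg tu c)) = sg (NN (NN tu)) c"
  proof -
    have "NA (NA (sg tu c)) = iv (dn tu) \<cdot> (sg tu c \<cdot> dn tu)" using dnN[of "sg tu c" tu] a by simp
    also have "\<dots> = sg (NN (NN tu)) c"
    proof -
      have e: "sg tu c \<cdot> dn tu = dn tu \<cdot> sg (NN (NN tu)) c" using S1[of "dn tu" "NN (NN tu)" tu c] a by simp
      show ?thesis using a by (simp add: e)
    qed
    finally show ?thesis .
  qed
  have sW: "NA (sg W c) = sg (NN W) c"
  proof -
    have "VA (NA (sg tu c)) (ii (NN Y)) = sg (VV (NN tu) (NN Y)) c" using S2a[of tu "NN Y" c] a by simp
    then have "NA (ii (NN (NN Y)) \<otimes> NA (NA (sg tu c))) = sg (NN W) c" unfolding W_def using a by simp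
    then show ?thesis unfolding nn W_def using Stn1[of "NN (NN Y)" "NN (NN tu)" c] a by simp
  qed
  have sY: "sg Y c = w \<cdot> (sg W c \<cdot> iv w)"
  proof -
    have e: "w \<cdot> sg W c = sg Y c \<cdot> w" using S1[of w W Y c] wt a obW by simp
    show ?thesis using wt a obW by (simp add: ext2[OF e])
  qed
  have "NA (sg Y c) = NA (iv w) \<cdot> (NA (sg W c) \<cdot> NA w)" unfolding sY using wt a obW by simp
  also have "\<dots> = NA (iv w) \<cdot> (sg (NN W) c \<cdot> NA w)" unfolding sW ..
  also have "\<dots> = sg (NN Y) c \<cdot> (NA (iv w) \<cdot> NA w)"
  proof -
    have e: "NA (iv w) \<cdot> sg (NN W) c = sg (NN Y) c \<cdot> NA (iv w)" using S1[of "NA (iv w)" "NN W" "NN Y" c] wt a obW by simp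
    show ?thesis using wt a obW by (simp del: ng_merge ng_merge2 add: ext2[OF e])
  qed
  also have "\<dots> = sg (NN Y) c" using wt a by simp
  finally show ?thesis .
qed

lemma endo_fo: "ar u \<Longrightarrow> dm u = NN tu \<Longrightarrow> cd u = NN tu \<Longrightarrow> \<exists>c. isc c \<and> u = sg (NN tu) c"
proof -
  assume a: "ar u" "dm u = NN tu" "cd u = NN tu"
  obtain x where x: "ar x" "dm x = tu" "cd x = tu" "NA x = u" using ng_full[of u tu tu] a by auto
  have "u = NA (sg tu x)" using S3[of x] x by simp
  also have "\<dots> = sg (NN tu) x" using S2[of tu x] x by simp
  finally show ?thesis using x by blast
qed

definition th where "th X = dn (NN X) \<cdot> NA (dn X)"
lemma th_ar[simp]: "ob X \<Longrightarrow> ar (th X)" unfolding th_def by simp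
lemma th_dom[simp]: "ob X \<Longrightarrow> dm (th X) = NN X" unfolding th_def by simp
lemma th_cod[simp]: "ob X \<Longrightarrow> cd (th X) = NN X" unfolding th_def by simp

lemma th_nat: "ar b \<Longrightarrow> dm b = X \<Longrightarrow> cd b = Y \<Longrightarrow> NA b \<cdot> th Y = th X \<cdot> NA b"
proof -
  assume a0: "ar b" "dm b = X" "cd b = Y"
  then have "ob X" "ob Y" by auto
  note a = a0 this
  have n1: "NA b \<cdot> dn (NN Y) = dn (NN X) \<cdot> NA (NA (NA b))" using dnN[of "NA b" "NN X"] a by simp
  have n2: "b \<cdot> dn X = dn Y \<cdot> NA (NA b)" using dnN[of b Y] a by simp
  have "NA b \<cdot> th Y = dn (NN X) \<cdot> NA (dn Y \<cdot> NA (NA b))" unfolding th_def using a by (simp add: n1 ext2[OF n1])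
  also have "\<dots> = dn (NN X) \<cdot> NA (b \<cdot> dn X)" unfolding n2 ..
  also have "\<dots> = th X \<cdot> NA b" unfolding th_def using a by simp
  finally show ?thesis .
qed

lemma th_NN: "ob X \<Longrightarrow> th (NN X) = NA (th X)"
proof -
  assume a: "ob X"
  have n: "dn X \<cdot> dn (NN (NN X)) = dn X \<cdot> NA (NA (dn X))" using dnN[of "dn X" X] a by simp
  have "dn (NN (NN X)) = NA (NA (dn X))"
    using iso_cancel_left[of "dn X" "dn (NN (NN X))" "NA (NA (dn X))"] n a by simp
  then show ?thesis unfolding th_def using a by simp
qed

end

context BB begin

lemma ee_ar[simp]: "ar ee" "dm ee = NN tu" "cd ee = tu" by simp_all

lemma ee_th: "ee \<cdot> th tu = ee"
proof -
  have ne: "NA ee = iv (dn tu) \<cdot> ee"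
  proof -
    have "iv (dn tu) \<cdot> ee = iv (dn tu) \<cdot> (dn tu \<cdot> NA ee)" using smix' by simp
    also have "\<dots> = NA ee" by simp
    finally show ?thesis by simp
  qed
  have sm2: "dn tu \<cdot> NA ee = ee" using smix' by simp
  have e1: "ee \<cdot> dn (NN tu) = ee \<cdot> NA (iv (dn tu))"
  proof -
    have "ee \<cdot> dn (NN tu) = dn tu \<cdot> NA (NA ee)" using dnN[of ee tu] by simp
    also have "\<dots> = dn tu \<cdot> NA (iv (dn tu) \<cdot> ee)" unfolding ne[symmetric] ..
    also have "\<dots> = dn tu \<cdot> (NA ee \<cdot> NA (iv (dn tu)))" using ng_comp[of ee "iv (dn tu)"] by simp
    also have "\<dots> = ee \<cdot> NA (iv (dn tu))" by (simp del: ng_merge ng_merge2 add: ext1[OF sm2])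
    finally show ?thesis .
  qed
  show ?thesis unfolding th_def by (simp add: e1 ext2[OF e1])
qed

lemma th_tu: "th tu = ii (NN tu)"
proof -
  obtain c where c: "isc c" "th tu = sg (NN tu) c" using endo_fo[of "th tu"] by auto
  have ce: "c \<cdot> ee = ee"
  proof -
    have "c \<cdot> ee = sg tu c \<cdot> ee" using S3 c by simp
    also have "\<dots> = ee \<cdot> sg (NN tu) c" using S1[of ee "NN tu" tu c] c by simp
    also have "\<dots> = ee" using ee_th c by simp
    finally show ?thesis .
  qed
  have "sg (NN tu) c = sg (NN tu) c \<cdot> (ru (NN tu) \<cdot> ((ii (NN tu) \<otimes> ee) \<cdot> dup (NN tu)))"
    using rcounit[of "NN tu"] c by simp
  also have "\<dots> = ru (NN tu) \<cdot> ((ii (NN tu) \<otimes> (c \<cdot> ee)) \<cdot> dup (NN tu))" unfolding sg_def using c by simp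
  also have "\<dots> = ii (NN tu)" unfolding ce using rcounit[of "NN tu"] by simp
  finally show ?thesis using c by simp
qed

lemma del_th: "ob B \<Longrightarrow> del (NN B) \<cdot> th B = del (NN B)"
proof -
  assume B: "ob B"
  obtain b where b: "ar b" "dm b = NN tu" "cd b = B" "NA b = iv (dn tu) \<cdot> del (NN B)"
    using ng_full[of "iv (dn tu) \<cdot> del (NN B)" B "NN tu"] B by auto
  have n: "NA b \<cdot> th B = th (NN tu) \<cdot> NA b" using th_nat b by blast
  have thN: "th (NN tu) = ii (NN (NN tu))" using th_NN[of tu] th_tu by simp
  have "iv (dn tu) \<cdot> (del (NN B) \<cdot> th B) = iv (dn tu) \<cdot> del (NN B)"
    using n unfolding thN b(4) using B by simp
  then show ?thesis using iso_cancel_left[of "iv (dn tu)" "del (NN B) \<cdot> th B" "del (NN B)"] B by simp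
qed

lemma cou_eq: "Cou C B = dn B \<cdot> NA (del (NN B))" unfolding Cou_def by simp
lemma cou_ar[simp]: "ob B \<Longrightarrow> ar (Cou C B)" unfolding cou_eq by simp
lemma cou_dom[simp]: "ob B \<Longrightarrow> dm (Cou C B) = NN tu" unfolding cou_eq by simp
lemma cou_cod[simp]: "ob B \<Longrightarrow> cd (Cou C B) = B" unfolding cou_eq by simp
lemma nab_eq: "Nab C B = dn B \<cdot> NA (dup (NN B))" unfolding Nab_def by simp
lemma nab_ar[simp]: "ob B \<Longrightarrow> ar (Nab C B)" unfolding nab_eq by simp
lemma nab_dom[simp]: "ob B \<Longrightarrow> dm (Nab C B) = VV B B" unfolding nab_eq by simp
lemma nab_cod[simp]: "ob B \<Longrightarrow> cd (Nab C B) = B" unfolding nab_eq by simp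

lemma NA_cou: "ob B \<Longrightarrow> NA (Cou C B) = iv (dn tu) \<cdot> del (NN B)"
proof -
  assume B: "ob B"
  have nn: "NA (NA (del (NN B))) = iv (dn tu) \<cdot> (del (NN B) \<cdot> dn (NN B))"
    using dnN[of "del (NN B)" tu] B by simp
  have "NA (Cou C B) = NA (NA (del (NN B))) \<cdot> NA (dn B)" unfolding cou_eq using ng_comp[of "NA (del (NN B))" "dn B"] B by simp
  also have "\<dots> = iv (dn tu) \<cdot> (del (NN B) \<cdot> th B)" unfolding nn th_def using B by simp
  also have "\<dots> = iv (dn tu) \<cdot> del (NN B)" using del_th B by simp
  finally show ?thesis .
qed

lemma iv_lu_dup: "ob A \<Longrightarrow> iv (lu A) = (del A \<otimes> ii A) \<cdot> dup A"
proof -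
  assume a: "ob A"
  have "iv (lu A) = iv (lu A) \<cdot> (lu A \<cdot> ((del A \<otimes> ii A) \<cdot> dup A))" using lcounit a by simp
  also have "\<dots> = (del A \<otimes> ii A) \<cdot> dup A" using a by simp
  finally show ?thesis .
qed

lemma unit_law: "ob B \<Longrightarrow> Nab C B \<cdot> VA (ii B) (Cou C B) = RUv C B"
proof -
  assume B: "ob B"
  show ?thesis unfolding nab_eq RUv_eq tau_def using B by (simp add: NA_cou iv_lu_dup)
qed


lemma KD: "KK (NN tu) (NN tu) \<cdot> (dup (NN tu) \<otimes> ii (NN (NN tu))) = eps (NN tu)"
proof -
  have obF: "ob (NN tu)" "ob (NN (NN tu))" by simp_all
  define u where "u = eps (NN tu) \<cdot> ((ii (NN tu) \<otimes> iv (dn tu)) \<cdot> iv (ru (NN tu)))"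
  have ut: "ar u" "dm u = NN tu" "cd u = NN tu" unfolding u_def  by simp_all
  obtain c where c: "isc c" "u = sg (NN tu) c" using endo_fo[OF ut] by auto
  define w where "w = c \<cdot> dn tu"
  have wt: "ar w" "dm w = (NN (NN tu))" "cd w = tu" unfolding w_def   using c by simp_all
  have EPS: "eps (NN tu) = ru (NN tu) \<cdot> (ii (NN tu) \<otimes> w)"
  proof -
    have "eps (NN tu) = u \<cdot> (ru (NN tu) \<cdot> (ii (NN tu) \<otimes> dn tu))" unfolding u_def  by simp
    also have "\<dots> = ru (NN tu) \<cdot> (ii (NN tu) \<otimes> w)" unfolding c(2) sg_def w_def  using c by simp
    finally show ?thesis .
  qed
  have en: "ee \<cdot> ru (NN tu) = ru tu \<cdot> (ee \<otimes> ii tu)" using ru_nat[of ee] by simp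
  have sn: "sh tu (NN tu) tu \<cdot> ((ee \<otimes> ii (NN tu)) \<otimes> w) = ((ee \<otimes> w) \<otimes> ii (NN tu)) \<cdot> sh (NN tu) (NN tu) (NN (NN tu))"
    using sh_nat[of ee "ii (NN tu)" w tu "NN tu" tu] wt obF  by simp
  have c2: "lu (NN tu) \<cdot> ((ru tu \<otimes> ii (NN tu)) \<cdot> sh tu (NN tu) tu) = ru (NN tu) \<cdot> (lu (NN tu) \<otimes> ii tu)" using C2 obF by simp
  have "KK (NN tu) (NN tu) \<cdot> (dup (NN tu) \<otimes> ii (NN (NN tu))) = lu (NN tu) \<cdot> (((ru tu \<cdot> (ee \<otimes> w)) \<otimes> ii (NN tu)) \<cdot> (sh (NN tu) (NN tu) (NN (NN tu)) \<cdot> (dup (NN tu) \<otimes> ii (NN (NN tu)))))"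
    unfolding KK_def EPS using obF wt by (simp add: en ext2[OF en])
  also have "\<dots> = lu (NN tu) \<cdot> ((ru tu \<otimes> ii (NN tu)) \<cdot> (((ee \<otimes> w) \<otimes> ii (NN tu)) \<cdot> (sh (NN tu) (NN tu) (NN (NN tu)) \<cdot> (dup (NN tu) \<otimes> ii (NN (NN tu))))))"
    using obF wt by simp
  also have "\<dots> = lu (NN tu) \<cdot> ((ru tu \<otimes> ii (NN tu)) \<cdot> (sh tu (NN tu) tu \<cdot> (((ee \<otimes> ii (NN tu)) \<otimes> w) \<cdot> (dup (NN tu) \<otimes> ii (NN (NN tu))))))"
    using obF wt by (simp del: tn_merge tn_merge2 add: sn[symmetric] ext2[OF sn[symmetric]])
  also have "\<dots> = ru (NN tu) \<cdot> ((lu (NN tu) \<otimes> ii tu) \<cdot> (((ee \<otimes> ii (NN tu)) \<otimes> w) \<cdot> (dup (NN tu) \<otimes> ii (NN (NN tu)))))"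
    using obF wt by (simp del: tn_merge tn_merge2 add: ext3[OF c2])
  also have "\<dots> = ru (NN tu) \<cdot> (ii (NN tu) \<otimes> w)" using obF wt lcounit[of "NN tu"]  by simp
  also have "\<dots> = eps (NN tu)" using EPS by simp
  finally show ?thesis  .
qed

lemma Qlem: "RUv C (NN tu) \<cdot> (mix C (NN tu) (NN tu) \<cdot> dup (NN tu)) = ii (NN tu)"
proof -
  have obF: "ob (NN tu)" by simp
  define c0 where "c0 = Cur C (TT (NN tu) (NN tu)) (NN (NN tu)) (NN tu) (KK (NN tu) (NN tu))"
  have c0t: "ar c0" "dm c0 = TT (NN tu) (NN tu)" "cd c0 = VV (NN (NN (NN tu))) (NN tu)" unfolding c0_def using obF by (simp_all del: Vee_def)
  have m: "mix C (NN tu) (NN tu) = VA (dn (NN tu)) (ii (NN tu)) \<cdot> c0" unfolding c0_def using MIX obF by simp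
  have ca: "c0 \<cdot> dup (NN tu) = Cur C (NN tu) (NN (NN tu)) (NN tu) (KK (NN tu) (NN tu) \<cdot> (dup (NN tu) \<otimes> ii (NN (NN tu))))"
    unfolding c0_def using curA[of "dup (NN tu)" "KK (NN tu) (NN tu)" "TT (NN tu) (NN tu)" "NN (NN tu)" "NN tu"] obF by simp
  have ce: "Cur C (NN tu) (NN (NN tu)) (NN tu) (KK (NN tu) (NN tu) \<cdot> (dup (NN tu) \<otimes> ii (NN (NN tu)))) = VA (iv (dn (NN tu))) (ii (NN tu)) \<cdot> iv (RUv C (NN tu))"
    using KD cur_eps[of "NN tu"] obF  by simp
  have "RUv C (NN tu) \<cdot> (mix C (NN tu) (NN tu) \<cdot> dup (NN tu)) = RUv C (NN tu) \<cdot> (VA (dn (NN tu)) (ii (NN tu)) \<cdot> (c0 \<cdot> dup (NN tu)))"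
    unfolding m using obF c0t by (simp del: Vee_def VeeA_def)
  also have "\<dots> = ii (NN tu)" unfolding ca ce using obF by simp
  finally show ?thesis  .
qed

theorem part2:
  assumes g: "ar g" "dm g = NN tu" "cd g = B"
  shows "plus C g (Cou C B) = g"
proof -
  have B: "ob B" using g by auto
  define R where "R = mix C (NN tu) (NN tu) \<cdot> dup (NN tu)"
  have obt: "ob (NN tu)" by simp
  have Rt: "ar R" "dm R = NN tu" "cd R = VV (NN tu) (NN tu)" unfolding R_def MIX[OF obt obt]
    by (simp_all del: Vee_def VeeA_def)
  have v: "VA g (Cou C B) = VA (ii B) (Cou C B) \<cdot> VA g (ii (NN tu))" using g B by simp
  have U: "Nab C B \<cdot> VA (ii B) (Cou C B) = RUv C B" using unit_law B by simp
  have rn: "RUv C B \<cdot> VA g (ii (NN tu)) = g \<cdot> RUv C (NN tu)" using RUv_nat[of g "NN tu" B] g by simp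
  have "plus C g (Cou C B) = Nab C B \<cdot> (VA g (Cou C B) \<cdot> R)" unfolding plus_def R_def using g by simp
  also have "\<dots> = Nab C B \<cdot> (VA (ii B) (Cou C B) \<cdot> (VA g (ii (NN tu)) \<cdot> R))"
    unfolding v using g B Rt by (simp del: Vee_def VeeA_def)
  also have "\<dots> = g \<cdot> (RUv C (NN tu) \<cdot> R)"
    using g B Rt by (simp del: Vee_def VeeA_def add: ext1[OF U] ext2[OF rn])
  also have "\<dots> = g" unfolding R_def Qlem using g by simp
  finally show ?thesis .
qed

end

theorem proposition5:
  fixes C :: "('o, 'a) sacat" and F :: "'o \<Rightarrow> 'b::boolean_algebra"
  assumes "B1_category C F"
    and "single_mixed C"
    and "Del C (Tu C) = IdA C (Tu C)"
  shows "(\<forall>A f. f \<in> hom C A (Tu C) \<longrightarrow> plus C f (Del C A) = f) \<and>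
         (\<forall>B g. g \<in> hom C (Fo C) B \<longrightarrow> plus C g (Cou C B) = g)"
proof -
  have sa: "star_autonomous C" using assms(1) unfolding B1_category_def by blast
  have co: "\<forall>A \<in> Ob C. Dup C A \<in> hom C A (Tn C A A) \<and> Del C A \<in> hom C A (Tu C) \<and>
       Cmp C (Asc C A A A) (Cmp C (TnA C (Dup C A) (IdA C A)) (Dup C A)) =
         Cmp C (TnA C (IdA C A) (Dup C A)) (Dup C A) \<and>
       Cmp C (Sw C A A) (Dup C A) = Dup C A \<and>
       Cmp C (RU C A) (Cmp C (TnA C (IdA C A) (Del C A)) (Dup C A)) = IdA C A"
    using assms(1) unfolding B1_category_def by blast
  interpret BB C
  proof (unfold_locales)
    show "star_autonomous C" by (rule sa)
    show "\<And>A. A \<in> Ob C \<Longrightarrow> Dup C A \<in> hom C A (Tn C A A)" using co by blast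
    show "\<And>A. A \<in> Ob C \<Longrightarrow> Del C A \<in> hom C A (Tu C)" using co by blast
    show "\<And>A. A \<in> Ob C \<Longrightarrow> Cmp C (Sw C A A) (Dup C A) = Dup C A" using co by blast
    show "\<And>A. A \<in> Ob C \<Longrightarrow> Cmp C (RU C A) (Cmp C (TnA C (IdA C A) (Del C A)) (Dup C A)) = IdA C A"
      using co by blast
    show "Del C (Fo C) = Cou C (Tu C)" using assms(2) unfolding single_mixed_def by blast
  qed
  show ?thesis
  proof (intro conjI allI impI)
    fix A f assume "f \<in> hom C A (Tu C)"
    then show "plus C f (Del C A) = f" using part1[of f A] by (simp add: hom_def)
  next
    fix B g assume "g \<in> hom C (Fo C) B"
    then show "plus C g (Cou C B) = g" using part2[of g B] by (simp add: hom_def Fo_def)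
  qed
qed

end
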